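(* For $j=1,\dots,n$ let $$Z_j=\langle\zeta\rangle^{-1}(hD_{z_j}-\zeta_j)+\tfrac12\langle\zeta\rangle^{-3}\zeta_j(hD_z-\zeta)^2-ihD_{\zeta_j}-\tfrac n4h\langle\zeta\rangle^{-2}\zeta_j,$$ a differential operator with holomorphic coefficients, where $D=-i\partial$ (holomorphic derivatives) and $(hD_z-\zeta)^2=\sum_k(hD_{z_k}-\zeta_k)^2$. Then for $u\in\mathscr A_\delta$ ($\delta>0$ small), the holomorphic function $Tu(z,\zeta)$ satisfies $Z_jTu=0$ near $\Lambda$; consequently, with $Z_j^\Lambda=Z_j|_\Lambda$ the restriction of $Z_j$ to the totally real submanifold $\Lambda$, $$Z_j^\Lambda T_\Lambda u(\alpha)=0,\qquad j=1,\dots,n .$$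
   Context: $\mathbb T^n=\mathbb R^n/2\pi\mathbb Z^n$, $h>0$; $\langle\zeta\rangle=(1+\sum\zeta_j^2)^{1/2}$. $\mathscr A_\delta=\{u\in L^2(\mathbb T^n):\sum_k|\hat u(k)|^2e^{4|k|\delta}<\infty\}$. $Tu(z,\zeta)=h^{-3n/4}\int_{\mathbb R^n}e^{\frac ih(\langle z-y,\zeta\rangle+\frac i2\langle\zeta\rangle(z-y)^2)}\langle\zeta\rangle^{n/4}u(y)dy$ ($u$ extended periodically). $\Lambda=\{(x+iG_\xi,\xi-iG_x):(x,\xi)\in T^*\mathbb T^n\}$ where $G\in S^1(T^*\mathbb T^n;\mathbb R)$ with $\sup_{|\alpha|+|\beta|\le2}\langle\xi\rangle^{-1+|\beta|}|\partial_x^\alpha\partial_\xi^\beta G|$ small; $T_\Lambda u=Tu|_\Lambda$. *)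

theory Defs
  imports "HOL-Analysis.Analysis"
begin

text \<open>Functions on the torus R^n / 2 pi Z^n are represented as 2 pi-periodic functions
  on R^n (this is also their periodic extension used in the FBI transform).\<close>

definition torus_periodic :: "(real^'n::finite \<Rightarrow> 'b) \<Rightarrow> bool" where
  "torus_periodic u \<longleftrightarrow> (\<forall>y i. u (y + (2 * pi) *\<^sub>R axis i 1) = u y)"

definition torus_cube :: "(real^'n::finite) set" where
  "torus_cube = cbox 0 (\<chi> i. 2 * pi)"

definition L2_torus :: "(real^'n::finite \<Rightarrow> complex) set" where
  "L2_torus = {u. torus_periodic u \<and> u \<in> borel_measurable lborel \<and>
      integrable (restrict_space lborel torus_cube) (\<lambda>y. (cmod (u y))\<^sup>2)}"

definition fourier_coeff :: "(real^'n::finite \<Rightarrow> complex) \<Rightarrow> int^'n \<Rightarrow> complex" where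
  "fourier_coeff u k = complex_of_real ((2 * pi) powr (- real CARD('n))) *
     (LINT y|restrict_space lborel torus_cube.
        u y * exp (- \<i> * complex_of_real (\<Sum>j\<in>UNIV. of_int (k $ j) * y $ j)))"

definition int_vec_norm :: "int^'n::finite \<Rightarrow> real" where
  "int_vec_norm k = norm ((\<chi> j. of_int (k $ j)) :: real^'n)"

definition A_delta :: "real \<Rightarrow> (real^'n::finite \<Rightarrow> complex) set" where
  "A_delta \<delta> = {u \<in> L2_torus.
      (\<lambda>k::int^'n. (cmod (fourier_coeff u k))\<^sup>2 * exp (4 * int_vec_norm k * \<delta>)) summable_on UNIV}"

definition jap :: "complex^'n::finite \<Rightarrow> complex" where
  "jap \<zeta> = csqrt (1 + (\<Sum>j\<in>UNIV. (\<zeta> $ j)\<^sup>2))"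

definition FBI :: "real \<Rightarrow> (real^'n::finite \<Rightarrow> complex) \<Rightarrow> complex^'n \<Rightarrow> complex^'n \<Rightarrow> complex" where
  "FBI h u z \<zeta> = complex_of_real (h powr (- 3 * real CARD('n) / 4)) *
     (LINT y|lborel.
        exp ((\<i> / complex_of_real h) *
             ((\<Sum>j\<in>UNIV. (z $ j - complex_of_real (y $ j)) * \<zeta> $ j)
              + (\<i> / 2) * jap \<zeta> * (\<Sum>j\<in>UNIV. (z $ j - complex_of_real (y $ j))\<^sup>2)))
        * jap \<zeta> powr (complex_of_real (real CARD('n) / 4)) * u y)"

definition cvec_upd :: "complex^'n::finite \<Rightarrow> 'n \<Rightarrow> complex \<Rightarrow> complex^'n" where
  "cvec_upd v j w = (\<chi> k. if k = j then w else v $ k)"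

type_synonym 'n cfun = "complex^'n \<Rightarrow> complex^'n \<Rightarrow> complex"

definition dz :: "'n::finite \<Rightarrow> 'n cfun \<Rightarrow> 'n cfun" where
  "dz j F = (\<lambda>z \<zeta>. deriv (\<lambda>w. F (cvec_upd z j w) \<zeta>) (z $ j))"

definition dzeta :: "'n::finite \<Rightarrow> 'n cfun \<Rightarrow> 'n cfun" where
  "dzeta j F = (\<lambda>z \<zeta>. deriv (\<lambda>w. F z (cvec_upd \<zeta> j w)) (\<zeta> $ j))"

definition Aop :: "real \<Rightarrow> 'n::finite \<Rightarrow> 'n cfun \<Rightarrow> 'n cfun" where
  "Aop h k F = (\<lambda>z \<zeta>. complex_of_real h * (- \<i>) * dz k F z \<zeta> - \<zeta> $ k * F z \<zeta>)"

definition Zop :: "real \<Rightarrow> 'n::finite \<Rightarrow> 'n cfun \<Rightarrow> 'n cfun" where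
  "Zop h j F = (\<lambda>z \<zeta>.
      inverse (jap \<zeta>) * Aop h j F z \<zeta>
    + (1/2) * inverse (jap \<zeta> ^ 3) * \<zeta> $ j * (\<Sum>k\<in>UNIV. Aop h k (Aop h k F) z \<zeta>)
    - \<i> * complex_of_real h * ((- \<i>) * dzeta j F z \<zeta>)
    - complex_of_real (real CARD('n) / 4 * h) * inverse (jap \<zeta> ^ 2) * \<zeta> $ j * F z \<zeta>)"

definition sep_holomorphic_at :: "'n::finite cfun \<Rightarrow> complex^'n \<Rightarrow> complex^'n \<Rightarrow> bool" where
  "sep_holomorphic_at F z \<zeta> \<longleftrightarrow>
     (\<forall>j. (\<lambda>w. F (cvec_upd z j w) \<zeta>) field_differentiable (at (z $ j)) \<and>
          (\<lambda>w. F z (cvec_upd \<zeta> j w)) field_differentiable (at (\<zeta> $ j)))"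

text \<open>Real partial derivatives of G(x,xi): Inl i = d/dx_i, Inr i = d/dxi_i.\<close>
type_synonym 'n rfun = "real^'n \<Rightarrow> real^'n \<Rightarrow> real"

fun rpd :: "('n::finite + 'n) \<Rightarrow> 'n rfun \<Rightarrow> 'n rfun" where
  "rpd (Inl i) G = (\<lambda>x \<xi>. deriv (\<lambda>t. G (x + t *\<^sub>R axis i 1) \<xi>) 0)"
| "rpd (Inr i) G = (\<lambda>x \<xi>. deriv (\<lambda>t. G x (\<xi> + t *\<^sub>R axis i 1)) 0)"

definition rpds :: "('n::finite + 'n) list \<Rightarrow> 'n rfun \<Rightarrow> 'n rfun" where
  "rpds ds G = foldr rpd ds G"

definition n_xi :: "('n::finite + 'n) list \<Rightarrow> nat" where
  "n_xi ds = length (filter (\<lambda>d. \<not> isl d) ds)"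

definition rjap :: "real^'n::finite \<Rightarrow> real" where
  "rjap \<xi> = sqrt (1 + (norm \<xi>)\<^sup>2)"

definition symbol_S1 :: "'n::finite rfun \<Rightarrow> bool" where
  "symbol_S1 G \<longleftrightarrow>
     (\<forall>x \<xi> i. G (x + (2 * pi) *\<^sub>R axis i 1) \<xi> = G x \<xi>) \<and>
     (\<forall>ds. continuous_on UNIV (\<lambda>p. rpds ds G (fst p) (snd p))) \<and>
     (\<forall>ds x \<xi> i. (\<lambda>t. rpds ds G (x + t *\<^sub>R axis i 1) \<xi>) differentiable (at 0) \<and>
                 (\<lambda>t. rpds ds G x (\<xi> + t *\<^sub>R axis i 1)) differentiable (at 0)) \<and>
     (\<forall>ds. \<exists>C. \<forall>x \<xi>. \<bar>rpds ds G x \<xi>\<bar> \<le> C * rjap \<xi> powr (1 - real (n_xi ds)))"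

definition seminorm2 :: "'n::finite rfun \<Rightarrow> real" where
  "seminorm2 G = Sup {rjap \<xi> powr (real (n_xi ds) - 1) * \<bar>rpds ds G x \<xi>\<bar> |
                       ds x \<xi>. length ds \<le> 2}"

definition Lambda_pt :: "'n::finite rfun \<Rightarrow> real^'n \<Rightarrow> real^'n \<Rightarrow> (complex^'n) \<times> (complex^'n)" where
  "Lambda_pt G x \<xi> =
     ((\<chi> k. complex_of_real (x $ k) + \<i> * complex_of_real (rpd (Inr k) G x \<xi>)),
      (\<chi> k. complex_of_real (\<xi> $ k) - \<i> * complex_of_real (rpd (Inl k) G x \<xi>)))"

definition Lambda :: "'n::finite rfun \<Rightarrow> ((complex^'n) \<times> (complex^'n)) set" where
  "Lambda G = range (\<lambda>(x, \<xi>). Lambda_pt G x \<xi>)"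

end

theory Submission
  imports Defs "HOL-Complex_Analysis.Complex_Analysis" "HOL-Probability.Probability"
begin

definition Qc :: "(real^'n::finite) set" where
  "Qc = {t. \<forall>j. 0 \<le> t$j \<and> t$j < 2*pi}"

definition shiftv :: "('n::finite \<Rightarrow> int) \<Rightarrow> real^'n" where
  "shiftv k = (\<chi> j. 2*pi* of_int (k j))"

lemma Qc_sets[measurable]: "Qc \<in> sets (borel :: (real^'n::finite) measure)"
  unfolding Qc_def by measurable

lemma Qc_unique:
  fixes y :: "real^'n::finite"
  assumes "y - shiftv k \<in> Qc" "y - shiftv k' \<in> Qc" shows "k = k'"
proof
  fix j
  from assms have a: "0 \<le> y$j - 2*pi*k j" "y$j - 2*pi*k j < 2*pi" "0 \<le> y$j - 2*pi*k' j" "y$j - 2*pi*k' j < 2*pi"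
    by (auto simp: Qc_def shiftv_def)
  have "2*pi*(real_of_int (k j) - k' j - 1) < 0" "2*pi*(real_of_int (k' j) - k j - 1) < 0"
    using a by (simp_all add: algebra_simps)
  then have "real_of_int (k j) - k' j - 1 < 0" "real_of_int (k' j) - k j - 1 < 0"
    using pi_gt_zero by (simp_all add: mult_less_0_iff)
  then show "k j = k' j" by linarith
qed

lemma Qc_exists:
  fixes y :: "real^'n::finite"
  shows "\<exists>k. y - shiftv k \<in> Qc"
proof
  define k where "k j = floor (y$j / (2*pi))" for j
  show "y - shiftv k \<in> Qc"
    unfolding Qc_def shiftv_def
  proof (safe)
    fix j
    have f1: "real_of_int (k j) \<le> y$j / (2*pi)" "y$j / (2*pi) < real_of_int (k j) + 1"
      unfolding k_def by linarith+
    have "2*pi* real_of_int (k j) \<le> y$j" using f1(1) pi_gt_zero by (simp add: field_simps)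
    moreover have "y$j < 2*pi*(real_of_int (k j) + 1)" using f1(2) pi_gt_zero by (simp add: field_simps)
    ultimately show "0 \<le> (y - (\<chi> j. 2 * pi * real_of_int (k j))) $ j" "(y - (\<chi> j. 2 * pi * real_of_int (k j))) $ j < 2 * pi"
      by (simp_all add: algebra_simps)
  qed
qed

lemma nn_integral_shift:
  fixes g :: "'a::euclidean_space \<Rightarrow> ennreal"
  assumes [measurable]: "g \<in> borel_measurable borel"
  shows "(\<integral>\<^sup>+t. g (t + c) \<partial>lborel) = (\<integral>\<^sup>+y. g y \<partial>lborel)"
proof -
  have "(\<integral>\<^sup>+y. g y \<partial>lborel) = (\<integral>\<^sup>+y. g y \<partial>distr lborel borel ((+) c))"
    by (simp add: lborel_distr_plus)
  also have "\<dots> = (\<integral>\<^sup>+t. g (c + t) \<partial>lborel)"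
    by (rule nn_integral_distr) auto
  finally show ?thesis by (simp add: add.commute)
qed

lemma tile:
  fixes \<phi> :: "real^'n::finite \<Rightarrow> ennreal"
  assumes [measurable]: "\<phi> \<in> borel_measurable borel"
  shows "(\<integral>\<^sup>+y. \<phi> y \<partial>lborel) =
     (\<integral>\<^sup>+k. (\<integral>\<^sup>+t. \<phi> (t + shiftv k) * indicator Qc t \<partial>lborel) \<partial>count_space UNIV)"
proof -
  have pt: "\<phi> y = (\<integral>\<^sup>+k. \<phi> y * indicator Qc (y - shiftv k) \<partial>count_space UNIV)" for y
  proof -
    obtain k0 where k0: "y - shiftv k0 \<in> Qc" using Qc_exists by blast
    have "(\<lambda>k. \<phi> y * indicator Qc (y - shiftv k)) = (\<lambda>k. \<phi> y * indicator {k0} k)"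
      proof
      fix k
      show "\<phi> y * indicator Qc (y - shiftv k) = \<phi> y * indicator {k0} k"
      proof (cases "k = k0")
        case True then show ?thesis using k0 by simp
      next
        case False
        then have "y - shiftv k \<notin> Qc" using Qc_unique[of y k k0] k0 by blast
        then show ?thesis using False by simp
      qed
    qed
    then show ?thesis by (simp add: nn_integral_cmult_indicator)
  qed
  have "(\<integral>\<^sup>+y. \<phi> y \<partial>lborel) = (\<integral>\<^sup>+y. (\<integral>\<^sup>+k. \<phi> y * indicator Qc (y - shiftv k) \<partial>count_space UNIV) \<partial>lborel)"
    by (rule nn_integral_cong) (rule pt)
  also have "\<dots> = (\<integral>\<^sup>+k. (\<integral>\<^sup>+y. \<phi> y * indicator Qc (y - shiftv k) \<partial>lborel) \<partial>count_space UNIV)"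
    by (rule nn_integral_count_space_nn_integral) (simp, measurable)
  also have "\<dots> = (\<integral>\<^sup>+k. (\<integral>\<^sup>+t. \<phi> (t + shiftv k) * indicator Qc t \<partial>lborel) \<partial>count_space UNIV)"
  proof (rule nn_integral_cong)
    fix k :: "'n \<Rightarrow> int"
    show "(\<integral>\<^sup>+y. \<phi> y * indicator Qc (y - shiftv k) \<partial>lborel) = (\<integral>\<^sup>+t. \<phi> (t + shiftv k) * indicator Qc t \<partial>lborel)"
      using nn_integral_shift[of "\<lambda>y. \<phi> y * indicator Qc (y - shiftv k)" "shiftv k"] by simp
  qed
  finally show ?thesis .
qed

lemma gauss1_integrable:
  fixes a :: real assumes a: "a > 0"
  shows "integrable lborel (\<lambda>x::real. exp (- a * x^2))"
proof -
  define \<sigma> where "\<sigma> = sqrt (1 / (2 * a))"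
  have s2: "\<sigma>^2 = 1 / (2*a)" using a by (simp add: \<sigma>_def)
  have eq: "exp (- a * x^2) = sqrt (2 * pi * \<sigma>^2) * normal_density 0 \<sigma> x" for x
  proof -
    have "\<sigma> > 0" using a by (simp add: \<sigma>_def)
    then show ?thesis using a pi_gt_zero unfolding normal_density_def s2 by (simp add: field_simps)
  qed
  have "\<sigma> > 0" using a by (simp add: \<sigma>_def)
  then show ?thesis unfolding eq by (intro integrable_mult_right integrable_normal_density) auto
qed

lemma gauss_nn_finite:
  fixes a :: real assumes a: "a > 0"
  shows "(\<integral>\<^sup>+x. ennreal (exp (- a * (norm (x::'a::euclidean_space))^2)) \<partial>lborel) < \<infinity>"
proof -
  have eq: "ennreal (exp (- a * (norm x)^2)) = (\<Prod>b\<in>Basis. ennreal (exp (- a * (x \<bullet> b)^2)))" for x :: 'a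
  proof -
    have "(norm x)^2 = (\<Sum>b\<in>Basis. (x \<bullet> b)^2)"
      unfolding power2_norm_eq_inner using euclidean_inner[of x x] by (simp add: power2_eq_square)
    then have "exp (- a * (norm x)^2) = (\<Prod>b\<in>Basis. exp (- a * (x \<bullet> b)^2))"
      by (simp add: sum_distrib_left exp_sum[symmetric] sum_negf)
    then show ?thesis by (simp add: prod_ennreal)
  qed
  have fin1: "(\<integral>\<^sup>+x. ennreal (exp (- a * x^2)) \<partial>lborel) < \<infinity>"
    using integrableD(2)[OF gauss1_integrable[OF a]] by (simp add: top.not_eq_extremum)
  have "(\<integral>\<^sup>+x. ennreal (exp (- a * (norm (x::'a))^2)) \<partial>lborel)
        = (\<Prod>b\<in>(Basis::'a set). (\<integral>\<^sup>+x. ennreal (exp (- a * x^2)) \<partial>lborel))"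
    unfolding eq by (rule nn_integral_lborel_prod) auto
  also have "\<dots> < \<infinity>" using fin1 by (simp add: power_less_top_ennreal)
  finally show ?thesis .
qed

lemma periodic_nat:
  fixes f :: "'a::real_vector \<Rightarrow> 'b"
  assumes "\<And>y. f (y + v) = f y"
  shows "f (y + real n *\<^sub>R v) = f y"
proof (induction n arbitrary: y)
  case 0 then show ?case by simp
next
  case (Suc n)
  have "f (y + real (Suc n) *\<^sub>R v) = f ((y + real n *\<^sub>R v) + v)"
    by (rule arg_cong[where f=f]) (simp add: algebra_simps)
  also have "\<dots> = f (y + real n *\<^sub>R v)" by (rule assms)
  also have "\<dots> = f y" by (rule Suc.IH)
  finally show ?case .
qed

lemma periodic_int:
  fixes f :: "'a::real_vector \<Rightarrow> 'b"
  assumes "\<And>y. f (y + v) = f y"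
  shows "f (y + real_of_int m *\<^sub>R v) = f y"
proof (cases "m \<ge> 0")
  case True
  then have "real_of_int m = real (nat m)" by simp
  then show ?thesis using periodic_nat[of f v, OF assms] by metis
next
  case False
  then have m: "real_of_int m = - real (nat (- m))" by simp
  have "f ((y + real_of_int m *\<^sub>R v) + real (nat (- m)) *\<^sub>R v) = f (y + real_of_int m *\<^sub>R v)"
    by (rule periodic_nat[of f v, OF assms])
  moreover have "(y + real_of_int m *\<^sub>R v) + real (nat (- m)) *\<^sub>R v = y"
    unfolding m by (simp add: algebra_simps)
  ultimately show ?thesis by simp
qed

lemma periodic_sum:
  fixes f :: "'a::real_vector \<Rightarrow> 'b"
  assumes "\<And>i y. f (y + w i) = f y" "finite S"
  shows "f (y + (\<Sum>i\<in>S. real_of_int (k i) *\<^sub>R w i)) = f y"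
  using assms(2)
proof (induction S arbitrary: y rule: finite_induct)
  case empty then show ?case by simp
next
  case (insert i S)
  have "f (y + (\<Sum>i\<in>insert i S. real_of_int (k i) *\<^sub>R w i))
      = f ((y + (\<Sum>i\<in>S. real_of_int (k i) *\<^sub>R w i)) + real_of_int (k i) *\<^sub>R w i)"
    by (rule arg_cong[where f=f]) (use insert in \<open>simp add: algebra_simps\<close>)
  also have "\<dots> = f (y + (\<Sum>i\<in>S. real_of_int (k i) *\<^sub>R w i))"
    by (rule periodic_int[of f "w i", OF assms(1)])
  also have "\<dots> = f y" by (rule insert.IH)
  finally show ?case .
qed

lemma shiftv_sum: "shiftv k = (\<Sum>i\<in>UNIV. real_of_int (k i) *\<^sub>R ((2*pi) *\<^sub>R axis i (1::real)))"
  by (simp add: vec_eq_iff shiftv_def sum_component axis_def if_distrib[of "(*) _"] cong: if_cong)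

lemma periodic_shiftv:
  assumes "torus_periodic u" shows "u (t + shiftv k) = u t"
  unfolding shiftv_sum
  by (rule periodic_sum) (use assms in \<open>auto simp: torus_periodic_def\<close>)

lemma gauss_cmp:
  fixes a b :: "'a::real_normed_vector"
  assumes "\<beta> > 0" "norm (b - a) \<le> d"
  shows "exp (- \<beta> * (norm a)^2) \<le> exp (\<beta> * d^2) * exp (- (\<beta>/2) * (norm b)^2)"
proof -
  have d0: "0 \<le> d" using assms(2) norm_ge_zero order_trans by blast
  have "norm b \<le> norm a + d" using norm_triangle_sub[of b a] assms(2)
    by (metis add.commute add_left_mono norm_minus_commute order_trans norm_triangle_ineq2 diff_le_eq)
  then have "(norm b)^2 \<le> (norm a + d)^2" by (simp add: power_mono)
  also have "\<dots> \<le> 2 * (norm a)^2 + 2 * d^2"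
    using sum_squares_ge_zero[of "norm a - d" 0] by (simp add: power2_eq_square algebra_simps)
  finally have "(norm b)^2 \<le> 2 * (norm a)^2 + 2 * d^2" .
  then have "(\<beta>/2) * (norm b)^2 \<le> (\<beta>/2) * (2 * (norm a)^2 + 2 * d^2)"
    using assms(1) by (intro mult_left_mono) auto
  then have "- \<beta> * (norm a)^2 \<le> \<beta> * d^2 + (- (\<beta>/2) * (norm b)^2)"
    by (simp add: algebra_simps)
  then show ?thesis by (simp add: exp_add[symmetric])
qed

lemma Qc_diff_norm:
  fixes t t' :: "real^'n::finite"
  assumes "t \<in> Qc" "t' \<in> Qc"
  shows "norm (t' - t) \<le> real CARD('n) * (2*pi)"
proof -
  have "norm (t' - t) \<le> (\<Sum>i\<in>UNIV. \<bar>(t' - t)$i\<bar>)" by (rule norm_le_l1_cart)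
  also have "\<dots> \<le> (\<Sum>i\<in>(UNIV::'n set). 2*pi)"
  proof (rule sum_mono)
    fix i
    from assms have "0 \<le> t$i" "t$i < 2*pi" "0 \<le> t'$i" "t'$i < 2*pi" by (auto simp: Qc_def)
    then show "\<bar>(t' - t)$i\<bar> \<le> 2*pi" by (simp add: abs_le_iff)
  qed
  finally show ?thesis by simp
qed

lemma Qc_sub_cube: "Qc \<subseteq> torus_cube"
  by (auto simp: Qc_def torus_cube_def mem_box_cart less_imp_le)

lemma Qc_pos: "emeasure lborel (Qc :: (real^'n::finite) set) \<noteq> 0"
proof -
  have "box 0 (\<chi> i. 2*pi) \<subseteq> (Qc :: (real^'n) set)"
    by (auto simp: Qc_def mem_box_cart less_imp_le)
  then have "emeasure lborel (box 0 (\<chi> i. 2*pi) :: (real^'n) set) \<le> emeasure lborel (Qc :: (real^'n) set)"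
    by (intro emeasure_mono) auto
  moreover have "emeasure lborel (box 0 (\<chi> i. 2*pi) :: (real^'n) set) \<noteq> 0"
  proof -
    have "(\<Prod>b\<in>(Basis::(real^'n) set). ((\<chi> i. 2*pi) - 0) \<bullet> b) > (0::real)"
      by (rule prod_pos) (auto simp: Basis_vec_def inner_axis)
    then show ?thesis by (subst emeasure_lborel_box) (auto simp: Basis_vec_def inner_axis)
  qed
  ultimately show ?thesis by (metis le_zero_eq)
qed

lemma L2_cube_finite:
  fixes u :: "real^'n::finite \<Rightarrow> complex"
  assumes "u \<in> L2_torus"
  shows "(\<integral>\<^sup>+t. ennreal (norm (u t)) * indicator Qc t \<partial>lborel) < \<infinity>"
proof -
  have [measurable]: "u \<in> borel_measurable borel" using assms by (simp add: L2_torus_def)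
  have cube[measurable]: "torus_cube \<in> sets (borel :: (real^'n) measure)"
    by (simp add: torus_cube_def)
  have int: "integrable (restrict_space lborel torus_cube) (\<lambda>y. (cmod (u y))\<^sup>2)"
    using assms by (simp add: L2_torus_def)
  have f1: "(\<integral>\<^sup>+t. ennreal ((cmod (u t))\<^sup>2) * indicator torus_cube t \<partial>lborel) < \<infinity>"
    using integrableD(2)[OF int] by (simp add: nn_integral_restrict_space top.not_eq_extremum)
  have "emeasure lborel (torus_cube::(real^'n) set) < \<infinity>"
    unfolding torus_cube_def by (rule emeasure_lborel_cbox_finite)
  then have f2: "(\<integral>\<^sup>+t. indicator torus_cube (t::real^'n) \<partial>lborel) < \<infinity>"
    by (subst nn_integral_indicator) (use cube in auto)
  have "(\<integral>\<^sup>+t. ennreal (norm (u t)) * indicator Qc t \<partial>lborel)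
      \<le> (\<integral>\<^sup>+t. (indicator torus_cube t + ennreal ((cmod (u t))\<^sup>2) * indicator torus_cube t) \<partial>lborel)"
  proof (rule nn_integral_mono)
    fix t :: "real^'n"
    have x: "norm (u t) \<le> 1 + (cmod (u t))\<^sup>2"
      using zero_le_power2[of "norm (u t) - 1/2"] by (simp add: power2_eq_square algebra_simps)
    show "ennreal (norm (u t)) * indicator Qc t \<le> indicator torus_cube t + ennreal ((cmod (u t))\<^sup>2) * indicator torus_cube t"
    proof (cases "t \<in> Qc")
      case True
      then have "t \<in> torus_cube" using Qc_sub_cube by blast
      have "ennreal (norm (u t)) \<le> ennreal (1 + (cmod (u t))\<^sup>2)" using x by (rule ennreal_leI)
      also have "\<dots> = 1 + ennreal ((cmod (u t))\<^sup>2)" by simp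
      finally show ?thesis using True \<open>t \<in> torus_cube\<close> by simp
    qed simp
  qed
  also have "\<dots> = (\<integral>\<^sup>+t. indicator torus_cube (t::real^'n) \<partial>lborel) + (\<integral>\<^sup>+t. ennreal ((cmod (u t))\<^sup>2) * indicator torus_cube t \<partial>lborel)"
    by (rule nn_integral_add) auto
  also have "\<dots> < \<infinity>" using f1 f2 by simp
  finally show ?thesis .
qed

lemma gauss_u_finite:
  fixes u :: "real^'n::finite \<Rightarrow> complex"
  assumes u: "u \<in> L2_torus" and b: "\<beta> > 0"
  shows "(\<integral>\<^sup>+y. ennreal (exp (- \<beta> * (norm y)^2)) * ennreal (norm (u y)) \<partial>lborel) < \<infinity>"
proof -
  have per: "torus_periodic u" and [measurable]: "u \<in> borel_measurable borel"
    using u by (simp_all add: L2_torus_def)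
  define V where "V = emeasure lborel (Qc :: (real^'n) set)"
  define d where "d = real CARD('n) * (2*pi)"
  define E where "E = ennreal (exp (\<beta> * d^2))"
  define G where "G c x = ennreal (exp (- c * (norm (x::real^'n))^2))" for c x
  define H where "H k = (\<integral>\<^sup>+t'. G (\<beta>/2) (t' + shiftv k) * indicator Qc t' \<partial>lborel)" for k
  define F0 where "F0 = (\<integral>\<^sup>+t. ennreal (norm (u t)) * indicator Qc t \<partial>lborel)"
  have Gm[measurable]: "G c \<in> borel_measurable borel" for c unfolding G_def by measurable
  have pw: "V * G \<beta> (t + shiftv k) \<le> E * H k" if t: "t \<in> Qc" for t k
  proof -
    have "V * G \<beta> (t + shiftv k) = (\<integral>\<^sup>+t'. G \<beta> (t + shiftv k) * indicator Qc (t'::real^'n) \<partial>lborel)"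
      unfolding V_def by (subst nn_integral_cmult_indicator) (auto simp: mult.commute)
    also have "\<dots> \<le> (\<integral>\<^sup>+t'. E * (G (\<beta>/2) (t' + shiftv k) * indicator Qc t') \<partial>lborel)"
    proof (rule nn_integral_mono)
      fix t'
      show "G \<beta> (t + shiftv k) * indicator Qc t' \<le> E * (G (\<beta>/2) (t' + shiftv k) * indicator Qc t')"
      proof (cases "t' \<in> Qc")
        case True
        have "norm ((t' + shiftv k) - (t + shiftv k)) \<le> d"
          using Qc_diff_norm[OF t True] by (simp add: d_def)
        from gauss_cmp[OF b this]
        have "G \<beta> (t + shiftv k) \<le> ennreal (exp (\<beta> * d^2) * exp (- (\<beta>/2) * (norm (t' + shiftv k))^2))"
          unfolding G_def by (rule ennreal_leI)
        also have "\<dots> = E * G (\<beta>/2) (t' + shiftv k)"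
          unfolding E_def G_def by (simp add: ennreal_mult)
        finally show ?thesis using True by simp
      qed simp
    qed
    also have "\<dots> = E * H k" unfolding H_def by (rule nn_integral_cmult) measurable
    finally show ?thesis .
  qed
  have meas1: "(\<lambda>y. G \<beta> y * ennreal (norm (u y))) \<in> borel_measurable borel" by measurable
  have eq1: "(\<integral>\<^sup>+y. G \<beta> y * ennreal (norm (u y)) \<partial>lborel)
      = (\<integral>\<^sup>+k. (\<integral>\<^sup>+t. G \<beta> (t + shiftv k) * (ennreal (norm (u t)) * indicator Qc t) \<partial>lborel) \<partial>count_space UNIV)"
    using tile[OF meas1] by (simp add: periodic_shiftv[OF per] mult.assoc)
  have "V * (\<integral>\<^sup>+y. G \<beta> y * ennreal (norm (u y)) \<partial>lborel)
      = (\<integral>\<^sup>+k. V * (\<integral>\<^sup>+t. G \<beta> (t + shiftv k) * (ennreal (norm (u t)) * indicator Qc t) \<partial>lborel) \<partial>count_space UNIV)"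
    unfolding eq1 by (rule nn_integral_cmult[symmetric]) simp
  also have "\<dots> = (\<integral>\<^sup>+k. (\<integral>\<^sup>+t. (V * G \<beta> (t + shiftv k)) * (ennreal (norm (u t)) * indicator Qc t) \<partial>lborel) \<partial>count_space UNIV)"
  proof (rule nn_integral_cong)
    fix k
    show "V * (\<integral>\<^sup>+t. G \<beta> (t + shiftv k) * (ennreal (norm (u t)) * indicator Qc t) \<partial>lborel)
        = (\<integral>\<^sup>+t. (V * G \<beta> (t + shiftv k)) * (ennreal (norm (u t)) * indicator Qc t) \<partial>lborel)"
      by (subst nn_integral_cmult[symmetric]) (measurable, simp add: mult.assoc)
  qed
  also have "\<dots> \<le> (\<integral>\<^sup>+k. (\<integral>\<^sup>+t. (E * H k) * (ennreal (norm (u t)) * indicator Qc t) \<partial>lborel) \<partial>count_space UNIV)"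
  proof (intro nn_integral_mono)
    fix k t
    show "(V * G \<beta> (t + shiftv k)) * (ennreal (norm (u t)) * indicator Qc t) \<le> (E * H k) * (ennreal (norm (u t)) * indicator Qc t)"
    proof (cases "t \<in> Qc")
      case True
      then show ?thesis using pw[OF True, of k] by (intro mult_right_mono) auto
    qed simp
  qed
  also have "\<dots> = (\<integral>\<^sup>+k. (E * H k) * F0 \<partial>count_space UNIV)"
  proof (rule nn_integral_cong)
    fix k show "(\<integral>\<^sup>+t. (E * H k) * (ennreal (norm (u t)) * indicator Qc t) \<partial>lborel) = (E * H k) * F0"
      unfolding F0_def by (rule nn_integral_cmult) measurable
  qed
  also have "\<dots> = (\<integral>\<^sup>+k. (E * F0) * H k \<partial>count_space UNIV)"
    by (simp add: mult_ac)
  also have "\<dots> = (E * F0) * (\<integral>\<^sup>+k. H k \<partial>count_space UNIV)"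
    by (rule nn_integral_cmult) simp
  also have "(\<integral>\<^sup>+k. H k \<partial>count_space UNIV) = (\<integral>\<^sup>+y. G (\<beta>/2) y \<partial>lborel)"
    unfolding H_def by (rule tile[symmetric]) measurable
  finally have le: "V * (\<integral>\<^sup>+y. G \<beta> y * ennreal (norm (u y)) \<partial>lborel) \<le> E * F0 * (\<integral>\<^sup>+y. G (\<beta>/2) y \<partial>lborel)" .
  have "(\<integral>\<^sup>+y. G (\<beta>/2) y \<partial>lborel) < \<infinity>"
    unfolding G_def using gauss_nn_finite[of "\<beta>/2", where 'a="real^'n"] b by simp
  moreover have "F0 < \<infinity>" unfolding F0_def by (rule L2_cube_finite[OF u])
  moreover have "E < \<infinity>" unfolding E_def by simp
  ultimately have "E * F0 * (\<integral>\<^sup>+y. G (\<beta>/2) y \<partial>lborel) < \<infinity>"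
    by (simp add: ennreal_mult_less_top)
  with le have "V * (\<integral>\<^sup>+y. G \<beta> y * ennreal (norm (u y)) \<partial>lborel) < \<infinity>" by (rule le_less_trans)
  moreover have "V \<noteq> 0" unfolding V_def by (rule Qc_pos)
  ultimately have "(\<integral>\<^sup>+y. G \<beta> y * ennreal (norm (u y)) \<partial>lborel) < \<infinity>"
    by (auto simp: ennreal_mult_less_top)
  then show ?thesis unfolding G_def by simp
qed

lemma gauss_u_integrable:
  fixes u :: "real^'n::finite \<Rightarrow> complex"
  assumes u: "u \<in> L2_torus" and b: "\<beta> > 0"
  shows "integrable lborel (\<lambda>y. exp (- \<beta> * (norm y)^2) * norm (u y))"
proof (rule integrableI_bounded)
  have [measurable]: "u \<in> borel_measurable borel" using u by (simp add: L2_torus_def)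
  show "(\<lambda>y. exp (- \<beta> * (norm y)^2) * norm (u y)) \<in> borel_measurable lborel" by measurable
  show "(\<integral>\<^sup>+y. ennreal (norm (exp (- \<beta> * (norm y)^2) * norm (u y))) \<partial>lborel) < \<infinity>"
    using gauss_u_finite[OF u b] by (simp add: ennreal_mult)
qed

lemma ball_half: "w \<in> ball w0 (r/2) \<Longrightarrow> w \<in> ball w0 r"
proof -
  assume "w \<in> ball w0 (r/2)"
  then have "dist w0 w < r/2" "0 \<le> dist w0 w" by simp_all
  then have "dist w0 w < r" by linarith
  then show ?thesis by simp
qed

lemma holo_integral:
  fixes K K' :: "complex \<Rightarrow> 'a \<Rightarrow> complex" and g :: "'a \<Rightarrow> real"
  assumes r: "r > 0"
    and der: "\<And>y w. y \<in> space M \<Longrightarrow> w \<in> ball w0 r \<Longrightarrow> ((\<lambda>w. K w y) has_field_derivative K' w y) (at w)"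
    and meas: "\<And>w. w \<in> ball w0 r \<Longrightarrow> K w \<in> borel_measurable M"
    and g: "integrable M g"
    and bound: "\<And>y w. y \<in> space M \<Longrightarrow> w \<in> ball w0 r \<Longrightarrow> norm (K w y) \<le> g y"
  shows "integrable M (K' w0) \<and> ((\<lambda>w. \<integral>y. K w y \<partial>M) has_field_derivative (\<integral>y. K' w0 y \<partial>M)) (at w0)"
proof -
  have w0: "w0 \<in> ball w0 r" using r by simp
  have dbound: "norm (K' w y) \<le> 4 * g y / r" if y: "y \<in> space M" and w: "w \<in> ball w0 (r/2)" for y w
  proof -
    have holo: "(\<lambda>w. K w y) holomorphic_on ball w0 r"
      unfolding holomorphic_on_def field_differentiable_def
    proof
      fix x assume "x \<in> ball w0 r"
      then show "\<exists>f'. ((\<lambda>w. K w y) has_field_derivative f') (at x within ball w0 r)"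
        using der[OF y] has_field_derivative_at_within by blast
    qed
    have sub: "cball w (r/4) \<subseteq> ball w0 r"
    proof
      fix x assume "x \<in> cball w (r/4)"
      then have "dist w x \<le> r/4" by simp
      moreover have "dist w0 w < r/2" using w by simp
      ultimately have "dist w0 x < r" using dist_triangle[of w0 x w] r by linarith
      then show "x \<in> ball w0 r" by simp
    qed
    have "norm ((deriv ^^ 1) (\<lambda>w. K w y) w) \<le> fact 1 * g y / (r/4)^1"
    proof (rule Cauchy_inequality)
      show "(\<lambda>w. K w y) holomorphic_on ball w (r/4)"
        using holo sub ball_subset_cball by (meson holomorphic_on_subset order_trans)
      show "continuous_on (cball w (r/4)) (\<lambda>w. K w y)"
        using holomorphic_on_imp_continuous_on[OF holo] sub by (rule continuous_on_subset)
      show "0 < r/4" using r by simp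
      fix x assume "norm (w - x) = r/4"
      then have "x \<in> cball w (r/4)" by (simp add: dist_norm)
      then show "norm (K x y) \<le> g y" using sub bound[OF y] by blast
    qed
    moreover have "deriv (\<lambda>w. K w y) w = K' w y"
      using w r by (intro DERIV_imp_deriv der[OF y]) auto
    ultimately show ?thesis using r by (simp add: field_simps)
  qed
  have qbound: "norm ((K x y - K w0 y) / (x - w0)) \<le> 4 * g y / r"
    if y: "y \<in> space M" and x: "x \<in> ball w0 (r/2)" "x \<noteq> w0" for x y
  proof -
    have "norm (K x y - K w0 y) \<le> (4 * g y / r) * norm (x - w0)"
    proof (rule field_differentiable_bound[of "ball w0 (r/2)"])
      show "convex (ball w0 (r/2))" by simp
      fix z assume z: "z \<in> ball w0 (r/2)"
      have "dist w0 z < r/2" "0 \<le> dist w0 z" using z by simp_all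
      then have "dist w0 z < r" by linarith
      then have "z \<in> ball w0 r" by simp
      then show "((\<lambda>w. K w y) has_field_derivative K' z y) (at z within ball w0 (r / 2))"
        using der[OF y] by (auto intro: has_field_derivative_at_within)
      show "norm (K' z y) \<le> 4 * g y / r" by (rule dbound[OF y z])
    qed (use x r in auto)
    then show ?thesis using x by (simp add: norm_divide divide_le_eq)
  qed
  have qlim: "(\<lambda>i. (K (X i) y - K w0 y) / (X i - w0)) \<longlonglongrightarrow> K' w0 y"
    if y: "y \<in> space M" and X: "X \<longlonglongrightarrow> w0" "\<And>i. X i \<noteq> w0" for X y
  proof -
    have "((\<lambda>w. (K w y - K w0 y) / (w - w0)) \<longlongrightarrow> K' w0 y) (at w0)"
      using der[OF y w0] by (simp add: has_field_derivative_iff)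
    moreover have "filterlim X (at w0) sequentially"
      using X by (intro filterlim_atI) auto
    ultimately show ?thesis by (rule filterlim_compose)
  qed
  define \<delta> where "\<delta> i = r / (2 * (real i + 2))" for i
  define X where "X i = w0 + complex_of_real (\<delta> i)" for i
  have dpos: "\<delta> i > 0" for i using r by (simp add: \<delta>_def)
  have dlt: "\<delta> i < r/2" for i
  proof -
    have "r * 1 < r * (real i + 2)" using r by (intro mult_strict_left_mono) auto
    then show ?thesis using r by (simp add: field_simps \<delta>_def)
  qed
  have Xne: "X i \<noteq> w0" for i
    using dpos[of i] unfolding X_def by (simp only: add_cancel_left_right of_real_eq_0_iff)
  have Xball: "X i \<in> ball w0 (r/2)" for i
    using dpos[of i] dlt[of i] by (simp add: X_def dist_norm)
  have Xlim: "X \<longlonglongrightarrow> w0"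
  proof -
    have "\<delta> \<longlonglongrightarrow> 0" unfolding \<delta>_def by real_asymp
    then have "(\<lambda>i. complex_of_real (\<delta> i)) \<longlonglongrightarrow> 0"
      using tendsto_of_real by fastforce
    then show ?thesis unfolding X_def using tendsto_add[of "\<lambda>_. w0" w0 sequentially] by fastforce
  qed
  have Kball: "K w \<in> borel_measurable M" if "w \<in> ball w0 (r/2)" for w
    by (rule meas, rule ball_half, rule that)
  have K'm: "K' w0 \<in> borel_measurable M"
  proof (rule borel_measurable_LIMSEQ_metric)
    fix i show "(\<lambda>y. (K (X i) y - K w0 y) / (X i - w0)) \<in> borel_measurable M"
      by (intro borel_measurable_divide borel_measurable_diff Kball[OF Xball[of i]] meas[OF w0] borel_measurable_const)
  next
    fix y assume "y \<in> space M"
    then show "(\<lambda>i. (K (X i) y - K w0 y) / (X i - w0)) \<longlonglongrightarrow> K' w0 y"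
      by (rule qlim) (use Xlim Xne in auto)
  qed
  have g4: "integrable M (\<lambda>y. 4 * g y / r)" using g by simp
  have intK': "integrable M (K' w0)"
  proof (rule Bochner_Integration.integrable_bound[OF g4 K'm])
    show "AE y in M. norm (K' w0 y) \<le> norm (4 * g y / r)"
    proof (rule AE_I2)
      fix y assume y: "y \<in> space M"
      have "norm (K' w0 y) \<le> 4 * g y / r" using dbound[OF y] r by simp
      also have "\<dots> \<le> norm (4 * g y / r)" unfolding real_norm_def by (rule abs_ge_self)
      finally show "norm (K' w0 y) \<le> norm (4 * g y / r)" .
    qed
  qed
  have intK: "integrable M (K w)" if "w \<in> ball w0 r" for w
  proof (rule Bochner_Integration.integrable_bound[OF g meas[OF that]])
    show "AE y in M. norm (K w y) \<le> norm (g y)"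
    proof (rule AE_I2)
      fix y assume y: "y \<in> space M"
      have "norm (K w y) \<le> g y" using bound[OF y that] .
      also have "\<dots> \<le> norm (g y)" by simp
      finally show "norm (K w y) \<le> norm (g y)" .
    qed
  qed
  have "((\<lambda>w. ((\<integral>y. K w y \<partial>M) - (\<integral>y. K w0 y \<partial>M)) / (w - w0)) \<longlongrightarrow> (\<integral>y. K' w0 y \<partial>M)) (at w0 within ball w0 (r/2))"
  proof (subst tendsto_at_iff_sequentially, intro allI impI)
    fix Y :: "nat \<Rightarrow> complex"
    assume Y: "\<forall>i. Y i \<in> ball w0 (r / 2) - {w0}" "Y \<longlonglongrightarrow> w0"
    have eq: "((\<integral>y. K (Y i) y \<partial>M) - (\<integral>y. K w0 y \<partial>M)) / (Y i - w0) = (\<integral>y. (K (Y i) y - K w0 y) / (Y i - w0) \<partial>M)" for i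
    proof -
      have "Y i \<in> ball w0 r" using Y(1) ball_half by blast
      then show ?thesis using intK w0 by simp
    qed
    have "(\<lambda>i. \<integral>y. (K (Y i) y - K w0 y) / (Y i - w0) \<partial>M) \<longlonglongrightarrow> (\<integral>y. K' w0 y \<partial>M)"
    proof (rule integral_dominated_convergence[OF K'm _ g4])
      fix i show "(\<lambda>y. (K (Y i) y - K w0 y) / (Y i - w0)) \<in> borel_measurable M"
        using Y(1) by (intro borel_measurable_divide borel_measurable_diff Kball meas[OF w0] borel_measurable_const) auto
    next
      show "AE y in M. (\<lambda>i. (K (Y i) y - K w0 y) / (Y i - w0)) \<longlonglongrightarrow> K' w0 y"
        using Y by (intro AE_I2 qlim) auto
    next
      fix i show "AE y in M. norm ((K (Y i) y - K w0 y) / (Y i - w0)) \<le> 4 * g y / r"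
        using Y(1) by (intro AE_I2 qbound) auto
    qed
    then show "((\<lambda>w. ((\<integral>y. K w y \<partial>M) - (\<integral>y. K w0 y \<partial>M)) / (w - w0)) \<circ> Y) \<longlonglongrightarrow> (\<integral>y. K' w0 y \<partial>M)"
      unfolding comp_def eq .
  qed
  then have "((\<lambda>w. \<integral>y. K w y \<partial>M) has_field_derivative (\<integral>y. K' w0 y \<partial>M)) (at w0 within ball w0 (r/2))"
    by (simp add: has_field_derivative_iff)
  have "((\<lambda>w. \<integral>y. K w y \<partial>M) has_field_derivative (\<integral>y. K' w0 y \<partial>M)) (at w0)"
  proof -
    have "at w0 within ball w0 (r/2) = at w0" by (rule at_within_open) (use r in auto)
    with \<open>((\<lambda>w. \<integral>y. K w y \<partial>M) has_field_derivative (\<integral>y. K' w0 y \<partial>M)) (at w0 within ball w0 (r/2))\<close>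
    show ?thesis by simp
  qed
  with intK' show ?thesis by simp
qed

lemma quad_bound:
  fixes p q s \<sigma> A B t \<alpha> M :: real
  assumes a: "\<alpha> > 0" "A \<ge> \<alpha>" and b: "\<bar>p\<bar> \<le> M" "\<bar>q\<bar> \<le> M" "\<bar>s\<bar> \<le> M" "\<bar>\<sigma>\<bar> \<le> M" "\<bar>A\<bar> \<le> M" "\<bar>B\<bar> \<le> M"
  shows "(p - t) * \<sigma> + q * s + (A/2) * ((p - t)^2 - q^2) - B * (p - t) * q
          \<ge> (\<alpha>/8) * t^2 - ((M + M^2)^2 / \<alpha> + M^2 + M^3/2 + \<alpha> * M^2 / 4)"
proof -
  define v where "v = p - t"
  define bb where "bb = M + M^2"
  have M0: "0 \<le> M" using b(1) by linarith
  have e1: "v * \<sigma> \<ge> - (\<bar>v\<bar> * M)"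
  proof -
    have "\<bar>v * \<sigma>\<bar> \<le> \<bar>v\<bar> * M" using b(4) by (simp add: abs_mult mult_left_mono)
    then show ?thesis by linarith
  qed
  have e2: "B * v * q \<le> (\<bar>v\<bar>) * M^2"
  proof -
    have "\<bar>B * v * q\<bar> = \<bar>v\<bar> * (\<bar>B\<bar> * \<bar>q\<bar>)" by (simp add: abs_mult)
    also have "\<dots> \<le> \<bar>v\<bar> * (M * M)" using b(2,6) M0 by (intro mult_left_mono mult_mono) auto
    finally show ?thesis by (simp add: power2_eq_square)
  qed
  have e3: "q * s \<ge> - (M^2)"
  proof -
    have "\<bar>q * s\<bar> \<le> M * M" using b(2,3) M0 by (simp add: abs_mult mult_mono)
    then show ?thesis by (simp add: power2_eq_square)
  qed
  have e4: "(A/2) * q^2 \<le> M^3/2"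
  proof -
    have "q^2 \<le> M^2" using power_mono[OF b(2) abs_ge_zero, of 2] by simp
    then have "A * q^2 \<le> M * M^2" using b(5) M0 by (intro mult_mono) auto
    then show ?thesis by (simp add: power3_eq_cube power2_eq_square)
  qed
  have e5: "(A/2) * v^2 \<ge> (\<alpha>/2) * v^2" using a by (intro mult_right_mono) auto
  have e6: "(\<alpha>/2) * v^2 - bb * \<bar>v\<bar> \<ge> (\<alpha>/4) * v^2 - bb^2 / \<alpha>"
  proof -
    have "0 \<le> (\<alpha> * \<bar>v\<bar> / 2 - bb)^2" by simp
    also have "(\<alpha> * \<bar>v\<bar> / 2 - bb)^2 = \<alpha>^2 * v^2 / 4 - \<alpha> * \<bar>v\<bar> * bb + bb^2"
      by (simp add: power2_eq_square algebra_simps abs_mult_self_eq)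
    finally have h: "0 \<le> \<alpha>^2 * v^2 / 4 - \<alpha> * \<bar>v\<bar> * bb + bb^2" .
    have "(\<alpha>/4) * v^2 - bb * \<bar>v\<bar> + bb^2/\<alpha> = (\<alpha>^2 * v^2 / 4 - \<alpha> * \<bar>v\<bar> * bb + bb^2) / \<alpha>"
      using a by (simp add: field_simps power2_eq_square)
    also have "\<dots> \<ge> 0" using h a by simp
    finally have "0 \<le> (\<alpha>/4) * v^2 - bb * \<bar>v\<bar> + bb^2/\<alpha>" .
    then show ?thesis by linarith
  qed
  have e7: "(\<alpha>/4) * v^2 \<ge> (\<alpha>/8) * t^2 - \<alpha> * M^2 / 4"
  proof -
    have "p^2 \<le> M^2" using power_mono[OF b(1) abs_ge_zero, of 2] by simp
    have "v^2 \<ge> t^2/2 - p^2"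
      using zero_le_power2[of "t - 2*p"] unfolding v_def by (simp add: power2_eq_square algebra_simps)
    then have "v^2 \<ge> t^2/2 - M^2" using \<open>p^2 \<le> M^2\<close> by linarith
    then have "(\<alpha>/4) * v^2 \<ge> (\<alpha>/4) * (t^2/2 - M^2)" using a by (intro mult_left_mono) auto
    then show ?thesis by (simp add: algebra_simps)
  qed
  have "(p - t) * \<sigma> + q * s + (A/2) * ((p - t)^2 - q^2) - B * (p - t) * q
      = v * \<sigma> + q * s + (A/2) * v^2 - (A/2) * q^2 - B * v * q"
    unfolding v_def by (simp add: algebra_simps)
  also have "\<dots> \<ge> (\<alpha>/2) * v^2 - bb * \<bar>v\<bar> - M^2 - M^3/2"
    using e1 e2 e3 e4 e5 unfolding bb_def by (simp add: algebra_simps)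
  finally show ?thesis using e6 e7 unfolding bb_def by linarith
qed

definition Sset :: "(complex^'n::finite) set" where
  "Sset = {\<zeta>. 0 < Re (1 + (\<Sum>j\<in>UNIV. (\<zeta>$j)^2))}"

lemma open_Sset: "open (Sset :: (complex^'n::finite) set)"
  unfolding Sset_def by (intro open_Collect_less continuous_intros)

lemma Sset_notin: "\<zeta> \<in> Sset \<Longrightarrow> 1 + (\<Sum>j\<in>UNIV. (\<zeta>$j)^2) \<notin> \<real>\<^sub>\<le>\<^sub>0"
  by (auto simp: Sset_def complex_nonpos_Reals_iff)

lemma Re_csqrt_pos: assumes "0 < Re w" shows "0 < Re (csqrt w)"
proof -
  have "Re (csqrt w) \<noteq> 0"
  proof
    assume "Re (csqrt w) = 0"
    then have "Re w = - ((Im (csqrt w))^2)"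
      using power2_csqrt[of w] by (metis Re_power2 power2_eq_square diff_0 mult_zero_left)
    then show False using assms by (smt (verit) zero_le_power2)
  qed
  then show ?thesis using Re_csqrt[of w] by linarith
qed

lemma Re_jap_pos: "\<zeta> \<in> Sset \<Longrightarrow> 0 < Re (jap \<zeta>)"
  unfolding jap_def Sset_def by (intro Re_csqrt_pos) simp

lemma isCont_jap: "\<zeta> \<in> Sset \<Longrightarrow> isCont jap \<zeta>"
  unfolding jap_def
  by (rule isCont_o2[where g=csqrt]) (auto intro!: continuous_intros continuous_at_csqrt Sset_notin)

lemma Re_i_div: "Re ((\<i> / complex_of_real h) * X) = - Im X / h"
  by (cases "h = 0") (simp_all add: Re_divide Im_divide field_simps power2_eq_square)

lemma phase_term:
  "Im ((w - complex_of_real t) * \<zeta>) + Re (J * (w - complex_of_real t)^2) / 2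
   = (Re w - t) * Im \<zeta> + Im w * Re \<zeta> + (Re J / 2) * ((Re w - t)^2 - (Im w)^2) - Im J * (Re w - t) * Im w"
proof -
  have "Re (J * (w - complex_of_real t)^2) = Re J * ((Re w - t)^2 - (Im w)^2) - 2 * Im J * (Re w - t) * Im w"
    by (simp add: power2_eq_square algebra_simps)
  moreover have "Im ((w - complex_of_real t) * \<zeta>) = (Re w - t) * Im \<zeta> + Im w * Re \<zeta>"
    by (simp add: algebra_simps)
  ultimately show ?thesis by (simp add: diff_divide_distrib)
qed

lemma Im_aux: "Im (A + (\<i> / 2) * J * B) = Im A + Re (J * B) / 2"
  by (simp add: algebra_simps)

lemma Re_phase:
  "Re ((\<i> / complex_of_real h) * ((\<Sum>j\<in>UNIV. (z $ j - complex_of_real (y $ j)) * \<zeta> $ j)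
       + (\<i> / 2) * J * (\<Sum>j\<in>UNIV. (z $ j - complex_of_real (y $ j))^2)))
   = - (\<Sum>j\<in>(UNIV::'n::finite set). Im ((z $ j - complex_of_real (y $ j)) * \<zeta> $ j) + Re (J * (z $ j - complex_of_real (y $ j))^2) / 2) / h"
  unfolding Re_i_div Im_aux
  by (simp add: Im_sum Re_sum sum.distrib sum_distrib_left sum_divide_distrib)

definition Kf :: "real \<Rightarrow> (real^'n::finite \<Rightarrow> complex) \<Rightarrow> complex^'n \<Rightarrow> complex^'n \<Rightarrow> real^'n \<Rightarrow> complex" where
  "Kf h u z \<zeta> y = exp ((\<i> / complex_of_real h) *
             ((\<Sum>j\<in>UNIV. (z $ j - complex_of_real (y $ j)) * \<zeta> $ j)
              + (\<i> / 2) * jap \<zeta> * (\<Sum>j\<in>UNIV. (z $ j - complex_of_real (y $ j))\<^sup>2)))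
        * jap \<zeta> powr (complex_of_real (real CARD('n) / 4)) * u y"

lemma FBI_Kf:
  fixes u :: "real^'n::finite \<Rightarrow> complex"
  shows "FBI h u z \<zeta> = complex_of_real (h powr (- 3 * real CARD('n::finite) / 4)) * (\<integral>y. Kf h u z \<zeta> y \<partial>lborel)"
  by (simp add: FBI_def Kf_def)

lemma norm_sq_vec: "(norm (y::real^'n::finite))^2 = (\<Sum>j\<in>UNIV. (y$j)^2)"
  by (simp add: norm_vec_def L2_set_def sum_nonneg)

lemma poly_gauss:
  fixes \<beta> t :: real
  assumes b: "\<beta> > 0" and t: "t \<ge> 0"
  shows "(1 + t) * exp (- \<beta> * t^2) \<le> exp (1 / (2*\<beta>)) * exp (- (\<beta>/2) * t^2)"
proof -
  have "0 \<le> (\<beta> * t - 1)^2" by simp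
  then have "0 \<le> (\<beta>^2 * t^2 - 2 * \<beta> * t + 1) / (2*\<beta>)" using b by (simp add: power2_eq_square algebra_simps)
  also have "(\<beta>^2 * t^2 - 2 * \<beta> * t + 1) / (2*\<beta>) = (\<beta>/2) * t^2 - t + 1/(2*\<beta>)"
    using b by (simp add: field_simps power2_eq_square)
  finally have tt: "t \<le> (\<beta>/2) * t^2 + 1/(2*\<beta>)" by linarith
  have "1 + t \<le> exp t" by (rule exp_ge_add_one_self)
  also have "\<dots> \<le> exp ((\<beta>/2) * t^2 + 1/(2*\<beta>))" using tt by simp
  finally have "(1 + t) * exp (- \<beta> * t^2) \<le> exp ((\<beta>/2) * t^2 + 1/(2*\<beta>)) * exp (- \<beta> * t^2)"
    by (intro mult_right_mono) auto
  also have "\<dots> = exp (1 / (2*\<beta>)) * exp (- (\<beta>/2) * t^2)"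
    by (simp add: exp_add[symmetric] algebra_simps)
  finally show ?thesis .
qed

lemma Kf_dom:
  fixes u :: "real^'n::finite \<Rightarrow> complex" and z0 \<zeta>0 :: "complex^'n"
  assumes h: "h > 0" and \<zeta>0: "\<zeta>0 \<in> Sset"
  shows "\<exists>r>0. \<exists>\<beta>>0. \<exists>C. \<forall>z \<zeta>. norm (z - z0) < r \<longrightarrow> norm (\<zeta> - \<zeta>0) < r \<longrightarrow>
     \<zeta> \<in> Sset \<and> norm (jap \<zeta>) \<le> C \<and> norm z \<le> C \<and>
     (\<forall>y. (1 + norm y) * norm (Kf h u z \<zeta> y) \<le> C * (exp (- \<beta> * (norm y)^2) * norm (u y)))"
proof -
  define J0 where "J0 = jap \<zeta>0"
  define a0 where "a0 = Re J0"
  have a0: "a0 > 0" using Re_jap_pos[OF \<zeta>0] by (simp add: a0_def J0_def)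
  have lim: "\<forall>e>0. \<exists>s>0. \<forall>x. x \<noteq> \<zeta>0 \<and> norm (x - \<zeta>0) < s \<longrightarrow> norm (jap x - J0) < e"
    using isCont_jap[OF \<zeta>0] unfolding isCont_def LIM_eq J0_def by simp
  have "min 1 (a0/2) > 0" using a0 by simp
  with lim obtain r1 where r1a: "r1 > 0" and
    r1b: "\<forall>x. x \<noteq> \<zeta>0 \<and> norm (x - \<zeta>0) < r1 \<longrightarrow> norm (jap x - J0) < min 1 (a0/2)"
    by blast
  have r1: "r1 > 0" "\<And>x. norm (x - \<zeta>0) < r1 \<Longrightarrow> norm (jap x - J0) < min 1 (a0/2)"
  proof -
    show "r1 > 0" by (rule r1a)
    fix x assume "norm (x - \<zeta>0) < r1"
    then show "norm (jap x - J0) < min 1 (a0/2)"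
      using r1b \<open>min 1 (a0/2) > 0\<close> by (cases "x = \<zeta>0") (auto simp: J0_def)
  qed
  obtain r2 where r2: "r2 > 0" "ball \<zeta>0 r2 \<subseteq> Sset" using open_Sset \<zeta>0 open_contains_ball by blast
  define r where "r = min r1 r2"
  define \<alpha> where "\<alpha> = a0/2"
  define M where "M = max (norm z0 + r) (max (norm \<zeta>0 + r) (norm J0 + 1))"
  define cq where "cq = (M + M^2)^2 / \<alpha> + M^2 + M^3/2 + \<alpha> * M^2 / 4"
  define \<beta>0 where "\<beta>0 = \<alpha> / (8*h)"
  define CJ where "CJ = (norm J0 + 1) powr (real CARD('n)/4)"
  define C where "C = max M (exp (real CARD('n) * cq / h) * CJ * exp (1/(2*\<beta>0)))"
  have rpos: "r > 0" using r1 r2 by (simp add: r_def)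
  have \<alpha>pos: "\<alpha> > 0" using a0 by (simp add: \<alpha>_def)
  have \<beta>0: "\<beta>0 > 0" using \<alpha>pos h by (simp add: \<beta>0_def)
  have main: "\<zeta> \<in> Sset \<and> norm (jap \<zeta>) \<le> C \<and> norm z \<le> C \<and>
     (\<forall>y. (1 + norm y) * norm (Kf h u z \<zeta> y) \<le> C * (exp (- (\<beta>0/2) * (norm y)^2) * norm (u y)))"
    if z: "norm (z - z0) < r" and \<zeta>: "norm (\<zeta> - \<zeta>0) < r" for z \<zeta> :: "complex^'n"
  proof -
    have "dist \<zeta>0 \<zeta> < r2" using \<zeta> by (simp add: dist_norm norm_minus_commute r_def)
    then have \<zeta>S: "\<zeta> \<in> Sset" using r2 by auto
    have Jc: "norm (jap \<zeta> - J0) < min 1 (a0/2)" using r1(2) \<zeta> by (simp add: r_def)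
    have JM1: "norm (jap \<zeta>) \<le> norm J0 + 1"
      using Jc norm_triangle_ineq2[of "jap \<zeta>" J0] by linarith
    have JM: "norm (jap \<zeta>) \<le> M" using JM1 by (simp add: M_def)
    have ReJ: "Re (jap \<zeta>) \<ge> \<alpha>"
    proof -
      have "\<bar>Re (jap \<zeta> - J0)\<bar> < a0/2" using Jc abs_Re_le_cmod[of "jap \<zeta> - J0"] by linarith
      then have "- (a0/2) < Re (jap \<zeta> - J0)" by (simp only: abs_less_iff) linarith
      then have "- (a0/2) < Re (jap \<zeta>) - a0" by (simp add: a0_def)
      then show ?thesis unfolding \<alpha>_def by linarith
    qed
    have zM: "norm z \<le> M"
      using z norm_triangle_ineq2[of z z0] by (simp add: M_def)
    have \<zeta>M: "norm \<zeta> \<le> M"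
      using \<zeta> norm_triangle_ineq2[of \<zeta> \<zeta>0] by (simp add: M_def)
    have JC: "norm (jap \<zeta>) \<le> C" using JM by (simp add: C_def)
    have zC: "norm z \<le> C" using zM by (simp add: C_def)
    have yb: "(1 + norm y) * norm (Kf h u z \<zeta> y) \<le> C * (exp (- (\<beta>0/2) * (norm y)^2) * norm (u y))" for y :: "real^'n"
    proof -
    have ej: "Im ((z$j - complex_of_real (y$j)) * \<zeta>$j) + Re (jap \<zeta> * (z$j - complex_of_real (y$j))^2) / 2
              \<ge> (\<alpha>/8) * (y$j)^2 - cq" for j
    proof -
      have zj: "norm (z$j) \<le> M" using order_trans[OF Finite_Cartesian_Product.norm_nth_le zM] .
      have \<zeta>j: "norm (\<zeta>$j) \<le> M" using order_trans[OF Finite_Cartesian_Product.norm_nth_le \<zeta>M] .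
      have b1: "\<bar>Re (z$j)\<bar> \<le> M" "\<bar>Im (z$j)\<bar> \<le> M" "\<bar>Re (\<zeta>$j)\<bar> \<le> M" "\<bar>Im (\<zeta>$j)\<bar> \<le> M"
               "\<bar>Re (jap \<zeta>)\<bar> \<le> M" "\<bar>Im (jap \<zeta>)\<bar> \<le> M"
        using zj \<zeta>j JM abs_Re_le_cmod abs_Im_le_cmod order_trans by metis+
      show ?thesis unfolding phase_term cq_def
        by (rule quad_bound[OF \<alpha>pos ReJ b1])
    qed
    have sumb: "(\<Sum>j\<in>UNIV. Im ((z$j - complex_of_real (y$j)) * \<zeta>$j) + Re (jap \<zeta> * (z$j - complex_of_real (y$j))^2) / 2)
          \<ge> (\<alpha>/8) * (norm y)^2 - real CARD('n) * cq"
    proof -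
      have "(\<Sum>j\<in>UNIV. (\<alpha>/8) * (y$j)^2 - cq) \<le> (\<Sum>j\<in>UNIV. Im ((z$j - complex_of_real (y$j)) * \<zeta>$j) + Re (jap \<zeta> * (z$j - complex_of_real (y$j))^2) / 2)"
        by (rule sum_mono) (rule ej)
      moreover have "(\<Sum>j\<in>(UNIV::'n set). (\<alpha>/8) * (y$j)^2 - cq) = (\<alpha>/8) * (norm y)^2 - real CARD('n) * cq"
        by (simp add: sum_subtractf sum_distrib_left norm_sq_vec)
      ultimately show ?thesis by simp
    qed
    define ph where "ph = (\<i> / complex_of_real h) *
             ((\<Sum>j\<in>UNIV. (z $ j - complex_of_real (y $ j)) * \<zeta> $ j)
              + (\<i> / 2) * jap \<zeta> * (\<Sum>j\<in>UNIV. (z $ j - complex_of_real (y $ j))\<^sup>2))"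
    have Reph: "Re ph \<le> real CARD('n) * cq / h + (- \<beta>0 * (norm y)^2)"
    proof -
      have "Re ph = - (\<Sum>j\<in>UNIV. Im ((z$j - complex_of_real (y$j)) * \<zeta>$j) + Re (jap \<zeta> * (z$j - complex_of_real (y$j))^2) / 2) / h"
        unfolding ph_def by (rule Re_phase)
      also have "\<dots> \<le> - ((\<alpha>/8) * (norm y)^2 - real CARD('n) * cq) / h"
      proof -
        have "((\<alpha>/8) * (norm y)^2 - real CARD('n) * cq) / h \<le> (\<Sum>j\<in>UNIV. Im ((z$j - complex_of_real (y$j)) * \<zeta>$j) + Re (jap \<zeta> * (z$j - complex_of_real (y$j))^2) / 2) / h"
          using sumb h by (intro divide_right_mono) auto
        then show ?thesis unfolding minus_divide_left[symmetric] by linarith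
      qed
      also have "\<dots> = real CARD('n) * cq / h + (- \<beta>0 * (norm y)^2)"
        using h by (simp add: \<beta>0_def field_simps)
      finally show ?thesis .
    qed
    have nexp: "norm (exp ph) \<le> exp (real CARD('n) * cq / h) * exp (- \<beta>0 * (norm y)^2)"
      using Reph by (simp add: exp_add[symmetric])
    have npow: "norm (jap \<zeta> powr (complex_of_real (real CARD('n) / 4))) \<le> CJ"
    proof -
      have "norm (jap \<zeta> powr (complex_of_real (real CARD('n) / 4))) = norm (jap \<zeta>) powr (real CARD('n) / 4)"
        by (subst norm_powr_real_powr') auto
      also have "\<dots> \<le> CJ" unfolding CJ_def by (rule powr_mono2) (use JM1 in auto)
      finally show ?thesis .
    qed
    have "(1 + norm y) * norm (Kf h u z \<zeta> y) = ((1 + norm y) * norm (exp ph)) * norm (jap \<zeta> powr (complex_of_real (real CARD('n) / 4))) * norm (u y)"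
      unfolding Kf_def ph_def by (simp add: norm_mult)
    also have "\<dots> \<le> ((1 + norm y) * (exp (real CARD('n) * cq / h) * exp (- \<beta>0 * (norm y)^2))) * CJ * norm (u y)"
      by (intro mult_right_mono mult_mono nexp npow mult_left_mono) auto
    also have "\<dots> = exp (real CARD('n) * cq / h) * CJ * (((1 + norm y) * exp (- \<beta>0 * (norm y)^2)) * norm (u y))"
      by (simp add: algebra_simps)
    also have "\<dots> \<le> exp (real CARD('n) * cq / h) * CJ * ((exp (1 / (2*\<beta>0)) * exp (- (\<beta>0/2) * (norm y)^2)) * norm (u y))"
      unfolding CJ_def by (intro mult_left_mono mult_right_mono poly_gauss \<beta>0) auto
    also have "\<dots> = (exp (real CARD('n) * cq / h) * CJ * exp (1 / (2*\<beta>0))) * (exp (- (\<beta>0/2) * (norm y)^2) * norm (u y))"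
      by (simp add: algebra_simps)
    also have "\<dots> \<le> C * (exp (- (\<beta>0/2) * (norm y)^2) * norm (u y))"
      by (intro mult_right_mono) (auto simp: C_def)
    finally show ?thesis .
    qed
    show ?thesis using \<zeta>S JC zC yb by blast
  qed
  show ?thesis
    apply (rule exI[of _ r])
    apply (intro conjI rpos)
    apply (rule exI[of _ "\<beta>0/2"])
    apply (intro conjI)
    using \<beta>0 apply simp
    apply (rule exI[of _ C])
    using main by blast
qed

lemma cvec_upd_nth: "cvec_upd z j w $ k = (if k = j then w else z $ k)"
  by (simp add: cvec_upd_def)

lemma cvec_upd_same: "cvec_upd z j (z $ j) = z"
  by (simp add: cvec_upd_def vec_eq_iff)

lemma cvec_upd_upd: "cvec_upd (cvec_upd z j v) j w = cvec_upd z j w"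
  by (simp add: cvec_upd_def vec_eq_iff)

lemma norm_cvec_upd: "norm (cvec_upd z j w - z) \<le> norm (w - z $ j)"
proof -
  have "norm (cvec_upd z j w - z) \<le> (\<Sum>k\<in>UNIV. norm ((cvec_upd z j w - z) $ k))"
    unfolding norm_vec_def by (rule L2_set_le_sum) simp
  also have "\<dots> = (\<Sum>k\<in>UNIV. if k = j then norm (w - z $ j) else 0)"
    by (rule sum.cong) (auto simp: cvec_upd_nth)
  also have "\<dots> = norm (w - z $ j)" by simp
  finally show ?thesis .
qed

lemma sum_upd: "(\<Sum>k\<in>UNIV. f k (cvec_upd z j w $ k)) = f j w + (\<Sum>k\<in>UNIV - {j}. f k (z $ k))"
proof -
  have "(\<Sum>k\<in>UNIV. f k (cvec_upd z j w $ k)) = f j (cvec_upd z j w $ j) + (\<Sum>k\<in>UNIV - {j}. f k (cvec_upd z j w $ k))"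
    by (rule sum.remove) auto
  also have "(\<Sum>k\<in>UNIV - {j}. f k (cvec_upd z j w $ k)) = (\<Sum>k\<in>UNIV - {j}. f k (z $ k))"
    by (rule sum.cong) (auto simp: cvec_upd_nth)
  finally show ?thesis by (simp add: cvec_upd_nth)
qed

lemma Kf_meas:
  fixes u :: "real^'n::finite \<Rightarrow> complex"
  assumes "u \<in> L2_torus"
  shows "Kf h u z \<zeta> \<in> borel_measurable lborel"
proof -
  have [measurable]: "u \<in> borel_measurable borel" using assms by (simp add: L2_torus_def)
  have c: "continuous_on UNIV (\<lambda>y::real^'n. exp ((\<i> / complex_of_real h) *
             ((\<Sum>j\<in>UNIV. (z $ j - complex_of_real (y $ j)) * \<zeta> $ j)
              + (\<i> / 2) * jap \<zeta> * (\<Sum>j\<in>UNIV. (z $ j - complex_of_real (y $ j))\<^sup>2))))"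
    by (intro continuous_intros)
  have [measurable]: "(\<lambda>y::real^'n. exp ((\<i> / complex_of_real h) *
             ((\<Sum>j\<in>UNIV. (z $ j - complex_of_real (y $ j)) * \<zeta> $ j)
              + (\<i> / 2) * jap \<zeta> * (\<Sum>j\<in>UNIV. (z $ j - complex_of_real (y $ j))\<^sup>2)))) \<in> borel_measurable borel"
    using c by (rule borel_measurable_continuous_onI)
  show ?thesis unfolding Kf_def by measurable
qed

definition Kz :: "real \<Rightarrow> (real^'n::finite \<Rightarrow> complex) \<Rightarrow> 'n \<Rightarrow> complex^'n \<Rightarrow> complex^'n \<Rightarrow> real^'n \<Rightarrow> complex" where
  "Kz h u j z \<zeta> y = (\<i> / complex_of_real h) * (\<zeta>$j + \<i> * jap \<zeta> * (z$j - complex_of_real (y$j))) * Kf h u z \<zeta> y"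

definition Ka :: "real \<Rightarrow> (real^'n::finite \<Rightarrow> complex) \<Rightarrow> 'n \<Rightarrow> complex^'n \<Rightarrow> complex^'n \<Rightarrow> real^'n \<Rightarrow> complex" where
  "Ka h u k z \<zeta> y = \<i> * jap \<zeta> * (z$k - complex_of_real (y$k)) * Kf h u z \<zeta> y"

definition Kaz :: "real \<Rightarrow> (real^'n::finite \<Rightarrow> complex) \<Rightarrow> 'n \<Rightarrow> complex^'n \<Rightarrow> complex^'n \<Rightarrow> real^'n \<Rightarrow> complex" where
  "Kaz h u k z \<zeta> y = \<i> * jap \<zeta> * Kf h u z \<zeta> y + \<i> * jap \<zeta> * (z$k - complex_of_real (y$k)) * Kz h u k z \<zeta> y"

definition Kzeta :: "real \<Rightarrow> (real^'n::finite \<Rightarrow> complex) \<Rightarrow> 'n \<Rightarrow> complex^'n \<Rightarrow> complex^'n \<Rightarrow> real^'n \<Rightarrow> complex" where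
  "Kzeta h u j z \<zeta> y = ((\<i> / complex_of_real h) * ((z$j - complex_of_real (y$j))
      + (\<i>/2) * (\<zeta>$j / jap \<zeta>) * (\<Sum>k\<in>UNIV. (z$k - complex_of_real (y$k))^2))
      + complex_of_real (real CARD('n)/4) * \<zeta>$j / (jap \<zeta>)^2) * Kf h u z \<zeta> y"

lemma Kf_upd_z:
  fixes u :: "real^'n::finite \<Rightarrow> complex"
  shows "Kf h u (cvec_upd z j w) \<zeta> y = exp ((\<i> / complex_of_real h) *
      (((w - complex_of_real (y$j)) * \<zeta>$j + (\<Sum>k\<in>UNIV - {j}. (z $ k - complex_of_real (y $ k)) * \<zeta> $ k))
       + (\<i> / 2) * jap \<zeta> * ((w - complex_of_real (y$j))^2 + (\<Sum>k\<in>UNIV - {j}. (z $ k - complex_of_real (y $ k))^2))))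
    * jap \<zeta> powr (complex_of_real (real CARD('n) / 4)) * u y"
  unfolding Kf_def
  using sum_upd[of "\<lambda>k v. (v - complex_of_real (y $ k)) * \<zeta> $ k" z j w]
        sum_upd[of "\<lambda>k v. (v - complex_of_real (y $ k))^2" z j w]
  by simp

lemma D1:
  fixes u :: "real^'n::finite \<Rightarrow> complex"
  assumes h: "h \<noteq> 0"
  shows "((\<lambda>w. Kf h u (cvec_upd z j w) \<zeta> y) has_field_derivative Kz h u j (cvec_upd z j w0) \<zeta> y) (at w0)"
proof -
  define A where "A = (\<Sum>k\<in>UNIV - {j}. (z $ k - complex_of_real (y $ k)) * \<zeta> $ k)"
  define B where "B = (\<Sum>k\<in>UNIV - {j}. (z $ k - complex_of_real (y $ k))^2)"
  define P where "P = jap \<zeta> powr (complex_of_real (real CARD('n) / 4)) * u y"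
  define ph where "ph w = (\<i> / complex_of_real h) * (((w - complex_of_real (y$j)) * \<zeta>$j + A)
       + (\<i> / 2) * jap \<zeta> * ((w - complex_of_real (y$j))^2 + B))" for w
  have eq: "Kf h u (cvec_upd z j w) \<zeta> y = exp (ph w) * P" for w
    unfolding Kf_upd_z ph_def A_def B_def P_def by (simp add: mult.assoc)
  have "((\<lambda>w. exp (ph w) * P) has_field_derivative
        (exp (ph w0) * ((\<i> / complex_of_real h) * (\<zeta>$j + (\<i> / 2) * jap \<zeta> * (2 * (w0 - complex_of_real (y$j)))))) * P) (at w0)"
    unfolding ph_def using h by (auto intro!: derivative_eq_intros)
  moreover have "exp (ph w0) * ((\<i> / complex_of_real h) * (\<zeta>$j + (\<i> / 2) * jap \<zeta> * (2 * (w0 - complex_of_real (y$j))))) * P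
      = Kz h u j (cvec_upd z j w0) \<zeta> y"
    unfolding Kz_def eq[symmetric] by (simp add: cvec_upd_nth eq algebra_simps)
  ultimately show ?thesis unfolding eq by simp
qed

lemma D2:
  fixes u :: "real^'n::finite \<Rightarrow> complex"
  assumes h: "h \<noteq> 0"
  shows "((\<lambda>w. Ka h u k (cvec_upd z k w) \<zeta> y) has_field_derivative Kaz h u k (cvec_upd z k w0) \<zeta> y) (at w0)"
proof -
  have eq: "(\<lambda>w. Ka h u k (cvec_upd z k w) \<zeta> y) = (\<lambda>w. (\<i> * jap \<zeta> * (w - complex_of_real (y$k))) * Kf h u (cvec_upd z k w) \<zeta> y)"
    by (simp add: Ka_def cvec_upd_nth fun_eq_iff)
  have lin: "((\<lambda>w. \<i> * jap \<zeta> * (w - complex_of_real (y$k))) has_field_derivative \<i> * jap \<zeta>) (at w0)"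
    by (auto intro!: derivative_eq_intros)
  have "((\<lambda>w. (\<i> * jap \<zeta> * (w - complex_of_real (y$k))) * Kf h u (cvec_upd z k w) \<zeta> y) has_field_derivative
        \<i> * jap \<zeta> * Kf h u (cvec_upd z k w0) \<zeta> y + Kz h u k (cvec_upd z k w0) \<zeta> y * (\<i> * jap \<zeta> * (w0 - complex_of_real (y$k)))) (at w0)"
    by (rule DERIV_mult[OF lin D1[OF h]])
  moreover have "\<i> * jap \<zeta> * Kf h u (cvec_upd z k w0) \<zeta> y + Kz h u k (cvec_upd z k w0) \<zeta> y * (\<i> * jap \<zeta> * (w0 - complex_of_real (y$k)))
      = Kaz h u k (cvec_upd z k w0) \<zeta> y"
    by (simp add: Kaz_def cvec_upd_nth)
  ultimately show ?thesis unfolding eq by simp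
qed

lemma jap_upd: "jap (cvec_upd \<zeta> j w) = csqrt (1 + (w^2 + (\<Sum>k\<in>UNIV - {j}. (\<zeta> $ k)^2)))"
  unfolding jap_def using sum_upd[of "\<lambda>k v. v^2" \<zeta> j w] by simp

lemma D_jap:
  assumes S: "cvec_upd \<zeta> j w0 \<in> Sset"
  shows "((\<lambda>w. jap (cvec_upd \<zeta> j w)) has_field_derivative w0 / jap (cvec_upd \<zeta> j w0)) (at w0)"
proof -
  define B where "B = (\<Sum>k\<in>UNIV - {j}. (\<zeta> $ k)^2)"
  have ni: "1 + (w0^2 + B) \<notin> \<real>\<^sub>\<le>\<^sub>0"
    using Sset_notin[OF S] unfolding B_def using sum_upd[of "\<lambda>k v. v^2" \<zeta> j w0] by simp
  have "((\<lambda>w. csqrt (1 + (w^2 + B))) has_field_derivative inverse (2 * csqrt (1 + (w0^2 + B))) * (2 * w0)) (at w0)"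
    by (rule DERIV_chain2[where f=csqrt and g="\<lambda>w. 1 + (w^2 + B)" and x=w0, OF has_field_derivative_csqrt[OF ni]]) (auto intro!: derivative_eq_intros)
  moreover have "inverse (2 * csqrt (1 + (w0^2 + B))) * (2 * w0) = w0 / csqrt (1 + (w0^2 + B))"
    by (simp add: field_simps)
  ultimately show ?thesis unfolding jap_upd B_def by simp
qed

lemma D3:
  fixes u :: "real^'n::finite \<Rightarrow> complex"
  assumes h: "h \<noteq> 0" and S: "cvec_upd \<zeta> j w0 \<in> Sset"
  shows "((\<lambda>w. Kf h u z (cvec_upd \<zeta> j w) y) has_field_derivative Kzeta h u j z (cvec_upd \<zeta> j w0) y) (at w0)"
proof -
  define A where "A = (\<Sum>k\<in>UNIV-{j}. (z$k - complex_of_real (y$k)) * \<zeta>$k)"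
  define Q where "Q = (\<Sum>k\<in>UNIV. (z$k - complex_of_real (y$k))^2)"
  define J where "J w = jap (cvec_upd \<zeta> j w)" for w
  define c where "c = complex_of_real (real CARD('n)/4)"
  define ph where "ph w = (\<i> / complex_of_real h) * (((z$j - complex_of_real (y$j)) * w + A) + (\<i>/2) * J w * Q)" for w
  have eq: "Kf h u z (cvec_upd \<zeta> j w) y = exp (ph w) * (J w powr c * u y)" for w
    unfolding Kf_def ph_def J_def c_def A_def Q_def
    using sum_upd[of "\<lambda>k v. (z$k - complex_of_real (y$k)) * v" \<zeta> j w] by (simp add: mult.assoc)
  have dJ: "(J has_field_derivative w0 / J w0) (at w0)" unfolding J_def by (rule D_jap[OF S])
  have ReJ: "0 < Re (J w0)" unfolding J_def by (rule Re_jap_pos[OF S])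
  have J0: "J w0 \<noteq> 0" using ReJ by auto
  have niJ: "J w0 \<notin> \<real>\<^sub>\<le>\<^sub>0" using ReJ by (auto simp: complex_nonpos_Reals_iff)
  define Dph where "Dph = (\<i> / complex_of_real h) * ((z$j - complex_of_real (y$j)) + (\<i>/2) * (w0 / J w0) * Q)"
  have dph: "(ph has_field_derivative Dph) (at w0)"
  proof -
    have "((\<lambda>w. (\<i> / complex_of_real h) * (((z$j - complex_of_real (y$j)) * w + A) + (\<i>/2) * J w * Q)) has_field_derivative
          (\<i> / complex_of_real h) * ((z$j - complex_of_real (y$j)) + (\<i>/2) * (w0 / J w0) * Q)) (at w0)"
      by (rule derivative_eq_intros dJ refl | simp add: mult_ac)+
    then show ?thesis unfolding ph_def Dph_def .
  qed
  have dexp: "((\<lambda>w. exp (ph w)) has_field_derivative exp (ph w0) * Dph) (at w0)"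
    by (rule DERIV_chain2[where f=exp and g=ph, OF DERIV_exp dph])
  have dP: "((\<lambda>w. J w powr c) has_field_derivative c * J w0 powr (c - 1) * (w0 / J w0)) (at w0)"
    by (rule DERIV_chain2[where f="\<lambda>x. x powr c" and g=J, OF has_field_derivative_powr[OF niJ] dJ])
  have dPu: "((\<lambda>w. J w powr c * u y) has_field_derivative (c * J w0 powr (c - 1) * (w0 / J w0)) * u y) (at w0)"
    by (rule DERIV_cmult_right[OF dP])
  have "((\<lambda>w. exp (ph w) * (J w powr c * u y)) has_field_derivative
        (exp (ph w0) * Dph) * (J w0 powr c * u y) + ((c * J w0 powr (c - 1) * (w0 / J w0)) * u y) * exp (ph w0)) (at w0)"
    by (rule DERIV_mult[OF dexp dPu])
  moreover have "(exp (ph w0) * Dph) * (J w0 powr c * u y) + ((c * J w0 powr (c - 1) * (w0 / J w0)) * u y) * exp (ph w0)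
      = Kzeta h u j z (cvec_upd \<zeta> j w0) y"
  proof -
    have pd: "J w0 powr (c - 1) = J w0 powr c / J w0" by (simp add: powr_diff)
    have "Kzeta h u j z (cvec_upd \<zeta> j w0) y = (Dph + c * w0 / (J w0)^2) * Kf h u z (cvec_upd \<zeta> j w0) y"
      unfolding Kzeta_def Dph_def c_def Q_def
      by (simp add: cvec_upd_nth J_def)
    also have "\<dots> = (Dph + c * w0 / (J w0)^2) * (exp (ph w0) * (J w0 powr c * u y))"
      by (simp only: eq)
    finally have "Kzeta h u j z (cvec_upd \<zeta> j w0) y = (Dph + c * w0 / (J w0)^2) * (exp (ph w0) * (J w0 powr c * u y))" .
    then show ?thesis unfolding pd using J0 by (simp add: field_simps power2_eq_square)
  qed
  ultimately show ?thesis unfolding eq by simp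
qed

lemma dom_data:
  fixes u :: "real^'n::finite \<Rightarrow> complex"
  assumes h: "h > 0" and S: "\<zeta> \<in> Sset" and u: "u \<in> L2_torus"
  shows "\<exists>r>0. \<exists>G. integrable lborel G \<and> (\<forall>z' \<zeta>'. norm (z' - z) < r \<longrightarrow> norm (\<zeta>' - \<zeta>) < r \<longrightarrow>
     \<zeta>' \<in> Sset \<and> (\<forall>y k. norm (Kf h u z' \<zeta>' y) \<le> G y \<and> norm (Ka h u k z' \<zeta>' y) \<le> G y))"
proof -
  from Kf_dom[OF h S, of z u] obtain r \<beta> C where r: "r > 0" and b: "\<beta> > 0" and
    dom0: "\<forall>z' \<zeta>'. norm (z' - z) < r \<longrightarrow> norm (\<zeta>' - \<zeta>) < r \<longrightarrow>
     \<zeta>' \<in> Sset \<and> norm (jap \<zeta>') \<le> C \<and> norm z' \<le> C \<and>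
     (\<forall>y. (1 + norm y) * norm (Kf h u z' \<zeta>' y) \<le> C * (exp (- \<beta> * (norm y)^2) * norm (u y)))"
    by (elim exE conjE) (rule that)
  have dom: "\<zeta>' \<in> Sset \<and> norm (jap \<zeta>') \<le> C \<and> norm z' \<le> C \<and>
     (\<forall>y. (1 + norm y) * norm (Kf h u z' \<zeta>' y) \<le> C * (exp (- \<beta> * (norm y)^2) * norm (u y)))"
    if "norm (z' - z) < r" "norm (\<zeta>' - \<zeta>) < r" for z' \<zeta>'
    using dom0 that by blast
  define M1 where "M1 = max C 1"
  define G where "G y = M1^3 * (exp (- \<beta> * (norm y)^2) * norm (u y))" for y :: "real^'n"
  have M1: "M1 \<ge> 1" "C \<le> M1" by (simp_all add: M1_def)
  have intG: "integrable lborel G" unfolding G_def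
    by (intro integrable_mult_right gauss_u_integrable[OF u b])
  have main: "\<zeta>' \<in> Sset \<and> (\<forall>y k. norm (Kf h u z' \<zeta>' y) \<le> G y \<and> norm (Ka h u k z' \<zeta>' y) \<le> G y)"
    if z': "norm (z' - z) < r" and \<zeta>': "norm (\<zeta>' - \<zeta>) < r" for z' \<zeta>'
  proof -
    note d = dom[OF z' \<zeta>']
    have C0: "0 \<le> C" using d norm_ge_zero order_trans by blast
    have M13: "C \<le> M1^3" "C * M1 * C \<le> M1^3"
    proof -
      have "1 * 1 \<le> M1 * M1" using M1(1) by (intro mult_mono) auto
      then have "M1 * 1 \<le> M1 * (M1 * M1)" using M1(1) by (intro mult_left_mono) auto
      then have "M1 \<le> M1^3" by (simp add: power3_eq_cube)
      then show "C \<le> M1^3" using M1 by linarith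
      have "C * M1 * C \<le> M1 * M1 * M1" using M1 C0 by (intro mult_mono) auto
      then show "C * M1 * C \<le> M1^3" by (simp add: power3_eq_cube)
    qed
    have yb: "norm (Kf h u z' \<zeta>' y) \<le> G y \<and> norm (Ka h u k z' \<zeta>' y) \<le> G y" for y k
    proof -
      define g0 where "g0 = exp (- \<beta> * (norm y)^2) * norm (u y)"
      have g0: "g0 \<ge> 0" by (simp add: g0_def)
      have b1: "(1 + norm y) * norm (Kf h u z' \<zeta>' y) \<le> C * g0" using d by (simp add: g0_def)
      have b2: "norm (Kf h u z' \<zeta>' y) \<le> (1 + norm y) * norm (Kf h u z' \<zeta>' y)"
        by (simp add: mult_le_cancel_right1)
      have k1: "norm (Kf h u z' \<zeta>' y) \<le> G y"
      proof -
        have "C * g0 \<le> M1^3 * g0" using M13 g0 by (intro mult_right_mono) auto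
        then show ?thesis using b1 b2 unfolding G_def g0_def by linarith
      qed
      have wk: "norm (z' $ k - complex_of_real (y $ k)) \<le> M1 * (1 + norm y)"
      proof -
        have "norm (z' $ k - complex_of_real (y $ k)) \<le> norm (z' $ k) + norm (complex_of_real (y $ k))"
          by (rule norm_triangle_ineq4)
        also have "\<dots> \<le> C + norm y"
          using Finite_Cartesian_Product.norm_nth_le[of z' k] d component_le_norm_cart[of y k] by simp
        also have "\<dots> \<le> M1 * (1 + norm y)"
        proof -
          have "1 * norm y \<le> M1 * norm y" using M1(1) by (intro mult_right_mono) auto
          then show ?thesis using M1(2) by (simp add: algebra_simps)
        qed
        finally show ?thesis .
      qed
      have "norm (Ka h u k z' \<zeta>' y) = norm (jap \<zeta>') * norm (z' $ k - complex_of_real (y $ k)) * norm (Kf h u z' \<zeta>' y)"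
        by (simp add: Ka_def norm_mult)
      also have "\<dots> \<le> C * (M1 * (1 + norm y)) * norm (Kf h u z' \<zeta>' y)"
        using d wk C0 by (intro mult_right_mono mult_mono) auto
      also have "\<dots> = C * M1 * ((1 + norm y) * norm (Kf h u z' \<zeta>' y))" by (simp add: algebra_simps)
      also have "\<dots> \<le> C * M1 * (C * g0)" using b1 C0 M1 by (intro mult_left_mono) auto
      also have "\<dots> = (C * M1 * C) * g0" by (simp add: algebra_simps)
      also have "\<dots> \<le> M1^3 * g0" using M13 g0 by (intro mult_right_mono) auto
      finally show ?thesis using k1 unfolding G_def g0_def by simp
    qed
    show ?thesis using d yb by blast
  qed
  show ?thesis using r intG main by blast
qed

lemma dist_upd: "w \<in> ball (z $ j) r \<Longrightarrow> norm (cvec_upd z j w - z) < r"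
  using norm_cvec_upd[of z j w] by (simp add: dist_norm norm_minus_commute)

lemma int_facts:
  fixes u :: "real^'n::finite \<Rightarrow> complex"
  assumes h: "h > 0" and S: "\<zeta> \<in> Sset" and u: "u \<in> L2_torus"
  shows "integrable lborel (Kf h u z \<zeta>)" "integrable lborel (Ka h u k z \<zeta>)"
   "integrable lborel (Kz h u j z \<zeta>) \<and> ((\<lambda>w. \<integral>y. Kf h u (cvec_upd z j w) \<zeta> y \<partial>lborel) has_field_derivative (\<integral>y. Kz h u j z \<zeta> y \<partial>lborel)) (at (z$j))"
   "integrable lborel (Kaz h u k z \<zeta>) \<and> ((\<lambda>w. \<integral>y. Ka h u k (cvec_upd z k w) \<zeta> y \<partial>lborel) has_field_derivative (\<integral>y. Kaz h u k z \<zeta> y \<partial>lborel)) (at (z$k))"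
   "integrable lborel (Kzeta h u j z \<zeta>) \<and> ((\<lambda>w. \<integral>y. Kf h u z (cvec_upd \<zeta> j w) y \<partial>lborel) has_field_derivative (\<integral>y. Kzeta h u j z \<zeta> y \<partial>lborel)) (at (\<zeta>$j))"
proof -
  from dom_data[OF h S u, of z] obtain r G where r: "r > 0" and intG: "integrable lborel G" and
    dom0: "\<forall>z' \<zeta>'. norm (z' - z) < r \<longrightarrow> norm (\<zeta>' - \<zeta>) < r \<longrightarrow>
     \<zeta>' \<in> Sset \<and> (\<forall>y k. norm (Kf h u z' \<zeta>' y) \<le> G y \<and> norm (Ka h u k z' \<zeta>' y) \<le> G y)"
    by (elim exE conjE) (rule that)
  have dom: "\<zeta>' \<in> Sset" "norm (Kf h u z' \<zeta>' y) \<le> G y" "norm (Ka h u k' z' \<zeta>' y) \<le> G y"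
    if "norm (z' - z) < r" "norm (\<zeta>' - \<zeta>) < r" for z' \<zeta>' y k'
    using dom0 that by blast+
  have h0: "h \<noteq> 0" using h by simp
  have um[measurable]: "u \<in> borel_measurable borel" using u by (simp add: L2_torus_def)
  have Kfm: "Kf h u z' \<zeta>' \<in> borel_measurable lborel" for z' \<zeta>' by (rule Kf_meas[OF u])
  have Kam: "Ka h u k' z' \<zeta>' \<in> borel_measurable lborel" for z' \<zeta>' k'
  proof -
    have [measurable]: "Kf h u z' \<zeta>' \<in> borel_measurable borel" using Kfm by simp
    have [measurable]: "(\<lambda>y::real^'n. y $ k') \<in> borel_measurable borel"
      by (intro borel_measurable_continuous_onI continuous_intros)
    show ?thesis unfolding Ka_def by measurable
  qed
  have Gb: "AE y in lborel. norm (f y) \<le> norm (G y)" if "\<And>y. norm (f y) \<le> G y" for f :: "real^'n \<Rightarrow> complex"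
    using that by (intro AE_I2) (metis abs_ge_self order_trans real_norm_def)
  show "integrable lborel (Kf h u z \<zeta>)"
    by (rule Bochner_Integration.integrable_bound[OF intG Kfm Gb]) (use dom r in auto)
  show "integrable lborel (Ka h u k z \<zeta>)"
    by (rule Bochner_Integration.integrable_bound[OF intG Kam Gb]) (use dom r in auto)
  have "integrable lborel (\<lambda>y. Kz h u j (cvec_upd z j (z$j)) \<zeta> y) \<and>
        ((\<lambda>w. \<integral>y. Kf h u (cvec_upd z j w) \<zeta> y \<partial>lborel) has_field_derivative (\<integral>y. Kz h u j (cvec_upd z j (z$j)) \<zeta> y \<partial>lborel)) (at (z$j))"
  proof (rule holo_integral[OF r])
    fix y w show "((\<lambda>w. Kf h u (cvec_upd z j w) \<zeta> y) has_field_derivative Kz h u j (cvec_upd z j w) \<zeta> y) (at w)"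
      by (rule D1[OF h0])
  next
    fix w show "(\<lambda>y. Kf h u (cvec_upd z j w) \<zeta> y) \<in> borel_measurable lborel" using Kfm by simp
  next
    show "integrable lborel G" by (rule intG)
  next
    fix y w assume "w \<in> ball (z$j) r"
    then show "norm (Kf h u (cvec_upd z j w) \<zeta> y) \<le> G y" using dom(2)[OF dist_upd] r by simp
  qed
  then show "integrable lborel (Kz h u j z \<zeta>) \<and> ((\<lambda>w. \<integral>y. Kf h u (cvec_upd z j w) \<zeta> y \<partial>lborel) has_field_derivative (\<integral>y. Kz h u j z \<zeta> y \<partial>lborel)) (at (z$j))"
    by (simp add: cvec_upd_same)
  have "integrable lborel (\<lambda>y. Kaz h u k (cvec_upd z k (z$k)) \<zeta> y) \<and>
        ((\<lambda>w. \<integral>y. Ka h u k (cvec_upd z k w) \<zeta> y \<partial>lborel) has_field_derivative (\<integral>y. Kaz h u k (cvec_upd z k (z$k)) \<zeta> y \<partial>lborel)) (at (z$k))"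
  proof (rule holo_integral[OF r])
    fix y w show "((\<lambda>w. Ka h u k (cvec_upd z k w) \<zeta> y) has_field_derivative Kaz h u k (cvec_upd z k w) \<zeta> y) (at w)"
      by (rule D2[OF h0])
  next
    fix w show "(\<lambda>y. Ka h u k (cvec_upd z k w) \<zeta> y) \<in> borel_measurable lborel" using Kam by simp
  next
    show "integrable lborel G" by (rule intG)
  next
    fix y w assume "w \<in> ball (z$k) r"
    then show "norm (Ka h u k (cvec_upd z k w) \<zeta> y) \<le> G y" using dom(3)[OF dist_upd] r by simp
  qed
  then show "integrable lborel (Kaz h u k z \<zeta>) \<and> ((\<lambda>w. \<integral>y. Ka h u k (cvec_upd z k w) \<zeta> y \<partial>lborel) has_field_derivative (\<integral>y. Kaz h u k z \<zeta> y \<partial>lborel)) (at (z$k))"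
    by (simp add: cvec_upd_same)
  have S': "cvec_upd \<zeta> j w \<in> Sset" if "w \<in> ball (\<zeta> $ j) r" for w
    using dom(1)[OF _ dist_upd[OF that], of z] r by simp
  have "integrable lborel (\<lambda>y. Kzeta h u j z (cvec_upd \<zeta> j (\<zeta>$j)) y) \<and>
        ((\<lambda>w. \<integral>y. Kf h u z (cvec_upd \<zeta> j w) y \<partial>lborel) has_field_derivative (\<integral>y. Kzeta h u j z (cvec_upd \<zeta> j (\<zeta>$j)) y \<partial>lborel)) (at (\<zeta>$j))"
  proof (rule holo_integral[OF r])
    fix y w assume "w \<in> ball (\<zeta>$j) r"
    then show "((\<lambda>w. Kf h u z (cvec_upd \<zeta> j w) y) has_field_derivative Kzeta h u j z (cvec_upd \<zeta> j w) y) (at w)"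
      by (intro D3[OF h0 S'])
  next
    fix w show "(\<lambda>y. Kf h u z (cvec_upd \<zeta> j w) y) \<in> borel_measurable lborel" using Kfm by simp
  next
    show "integrable lborel G" by (rule intG)
  next
    fix y w assume "w \<in> ball (\<zeta>$j) r"
    then show "norm (Kf h u z (cvec_upd \<zeta> j w) y) \<le> G y" using dom(2)[OF _ dist_upd, of z] r by simp
  qed
  then show "integrable lborel (Kzeta h u j z \<zeta>) \<and> ((\<lambda>w. \<integral>y. Kf h u z (cvec_upd \<zeta> j w) y \<partial>lborel) has_field_derivative (\<integral>y. Kzeta h u j z \<zeta> y \<partial>lborel)) (at (\<zeta>$j))"
    by (simp add: cvec_upd_same)
qed

lemma pointwise_zero:
  fixes u :: "real^'n::finite \<Rightarrow> complex"
  assumes h: "h \<noteq> 0" and J: "jap \<zeta> \<noteq> 0"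
  shows "inverse (jap \<zeta>) * Ka h u j z \<zeta> y
    + (1/2) * inverse (jap \<zeta> ^ 3) * \<zeta> $ j * (\<Sum>k\<in>UNIV. complex_of_real h * (- \<i>) * Kaz h u k z \<zeta> y - \<zeta> $ k * Ka h u k z \<zeta> y)
    - \<i> * complex_of_real h * ((- \<i>) * Kzeta h u j z \<zeta> y)
    - complex_of_real (real CARD('n) / 4 * h) * inverse (jap \<zeta> ^ 2) * \<zeta> $ j * Kf h u z \<zeta> y = 0"
proof -
  define E where "E = Kf h u z \<zeta> y"
  define JJ where "JJ = jap \<zeta>"
  define w where "w k = z$k - complex_of_real (y$k)" for k
  define Q where "Q = (\<Sum>k\<in>UNIV. (w k)^2)"
  have k: "complex_of_real h * (- \<i>) * Kaz h u k z \<zeta> y - \<zeta> $ k * Ka h u k z \<zeta> y = (complex_of_real h * JJ - JJ^2 * (w k)^2) * E" for k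
    using h unfolding Kaz_def Kz_def Ka_def E_def JJ_def w_def by (simp add: field_simps power2_eq_square)
  have s: "(\<Sum>k\<in>UNIV. complex_of_real h * (- \<i>) * Kaz h u k z \<zeta> y - \<zeta> $ k * Ka h u k z \<zeta> y)
      = (of_nat CARD('n) * complex_of_real h * JJ - JJ^2 * Q) * E"
    unfolding k Q_def by (simp add: sum_subtractf sum_distrib_left sum_distrib_right algebra_simps)
  have ka: "Ka h u j z \<zeta> y = \<i> * JJ * w j * E" unfolding Ka_def JJ_def w_def E_def by simp
  have kz: "Kzeta h u j z \<zeta> y = ((\<i> / complex_of_real h) * (w j + (\<i>/2) * (\<zeta>$j / JJ) * Q)
      + complex_of_real (real CARD('n)/4) * \<zeta>$j / JJ^2) * E"
    unfolding Kzeta_def JJ_def w_def E_def Q_def by simp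
  have JJ0: "JJ \<noteq> 0" using J by (simp add: JJ_def)
  show ?thesis unfolding s ka kz E_def[symmetric] JJ_def[symmetric]
    using h JJ0 by (simp add: field_simps power2_eq_square power3_eq_cube)
qed

lemma Omega_facts:
  fixes u :: "real^'n::finite \<Rightarrow> complex"
  assumes h: "h > 0" and u: "u \<in> L2_torus" and S: "\<zeta> \<in> Sset"
  shows "sep_holomorphic_at (FBI h u) z \<zeta> \<and> (\<forall>j. Zop h j (FBI h u) z \<zeta> = 0)"
proof -
  define c0 where "c0 = complex_of_real (h powr (- 3 * real CARD('n) / 4))"
  have h0: "h \<noteq> 0" using h by simp
  have Feq: "FBI h u z' \<zeta>' = c0 * (\<integral>y. Kf h u z' \<zeta>' y \<partial>lborel)" for z' \<zeta>'
    by (simp add: FBI_Kf c0_def)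
  note IF = int_facts[OF h _ u]
  have dF: "((\<lambda>w. FBI h u (cvec_upd z' j w) \<zeta>') has_field_derivative c0 * (\<integral>y. Kz h u j z' \<zeta>' y \<partial>lborel)) (at (z'$j))"
    if "\<zeta>' \<in> Sset" for z' \<zeta>' j
    unfolding Feq by (rule DERIV_cmult) (rule IF(3)[OF that, THEN conjunct2])
  have dzF: "dz j (FBI h u) z' \<zeta>' = c0 * (\<integral>y. Kz h u j z' \<zeta>' y \<partial>lborel)" if "\<zeta>' \<in> Sset" for z' \<zeta>' j
    unfolding dz_def by (rule DERIV_imp_deriv[OF dF[OF that]])
  have dZF: "((\<lambda>w. FBI h u z (cvec_upd \<zeta> j w)) has_field_derivative c0 * (\<integral>y. Kzeta h u j z \<zeta> y \<partial>lborel)) (at (\<zeta>$j))" for j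
    unfolding Feq by (rule DERIV_cmult) (rule IF(5)[OF S, THEN conjunct2])
  have dzetaF: "dzeta j (FBI h u) z \<zeta> = c0 * (\<integral>y. Kzeta h u j z \<zeta> y \<partial>lborel)" for j
    unfolding dzeta_def by (rule DERIV_imp_deriv[OF dZF])
  have AopF: "Aop h k (FBI h u) z' \<zeta>' = c0 * (\<integral>y. Ka h u k z' \<zeta>' y \<partial>lborel)" if S': "\<zeta>' \<in> Sset" for z' \<zeta>' k
  proof -
    have pw: "Ka h u k z' \<zeta>' y = complex_of_real h * (- \<i>) * Kz h u k z' \<zeta>' y - \<zeta>'$k * Kf h u z' \<zeta>' y" for y
      using h0 by (simp add: Ka_def Kz_def field_simps)
    have "(\<integral>y. Ka h u k z' \<zeta>' y \<partial>lborel) = (\<integral>y. complex_of_real h * (- \<i>) * Kz h u k z' \<zeta>' y - \<zeta>'$k * Kf h u z' \<zeta>' y \<partial>lborel)"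
      by (simp only: pw)
    also have "\<dots> = complex_of_real h * (- \<i>) * (\<integral>y. Kz h u k z' \<zeta>' y \<partial>lborel) - \<zeta>'$k * (\<integral>y. Kf h u z' \<zeta>' y \<partial>lborel)"
      using IF(1)[OF S'] IF(3)[OF S', THEN conjunct1] by simp
    finally have I: "(\<integral>y. Ka h u k z' \<zeta>' y \<partial>lborel) = complex_of_real h * (- \<i>) * (\<integral>y. Kz h u k z' \<zeta>' y \<partial>lborel) - \<zeta>'$k * (\<integral>y. Kf h u z' \<zeta>' y \<partial>lborel)" .
    have "Aop h k (FBI h u) z' \<zeta>' = c0 * (complex_of_real h * (- \<i>) * (\<integral>y. Kz h u k z' \<zeta>' y \<partial>lborel) - \<zeta>'$k * (\<integral>y. Kf h u z' \<zeta>' y \<partial>lborel))"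
      by (simp add: Aop_def dzF[OF S'] Feq algebra_simps)
    then show ?thesis by (simp only: I)
  qed
  have dzAop: "dz k (Aop h k (FBI h u)) z \<zeta> = c0 * (\<integral>y. Kaz h u k z \<zeta> y \<partial>lborel)" for k
  proof -
    have "(\<lambda>w. Aop h k (FBI h u) (cvec_upd z k w) \<zeta>) = (\<lambda>w. c0 * (\<integral>y. Ka h u k (cvec_upd z k w) \<zeta> y \<partial>lborel))"
      using AopF[OF S] by simp
    moreover have "((\<lambda>w. c0 * (\<integral>y. Ka h u k (cvec_upd z k w) \<zeta> y \<partial>lborel)) has_field_derivative c0 * (\<integral>y. Kaz h u k z \<zeta> y \<partial>lborel)) (at (z$k))"
      by (rule DERIV_cmult) (rule IF(4)[OF S, THEN conjunct2])
    ultimately show ?thesis unfolding dz_def by (simp add: DERIV_imp_deriv)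
  qed
  have AAop: "Aop h k (Aop h k (FBI h u)) z \<zeta> = c0 * (\<integral>y. complex_of_real h * (- \<i>) * Kaz h u k z \<zeta> y - \<zeta> $ k * Ka h u k z \<zeta> y \<partial>lborel)" for k
  proof -
    have "(\<integral>y. complex_of_real h * (- \<i>) * Kaz h u k z \<zeta> y - \<zeta> $ k * Ka h u k z \<zeta> y \<partial>lborel)
       = complex_of_real h * (- \<i>) * (\<integral>y. Kaz h u k z \<zeta> y \<partial>lborel) - \<zeta> $ k * (\<integral>y. Ka h u k z \<zeta> y \<partial>lborel)"
      using IF(2)[OF S] IF(4)[OF S, THEN conjunct1] by simp
    moreover have "Aop h k (Aop h k (FBI h u)) z \<zeta> = c0 * (complex_of_real h * (- \<i>) * (\<integral>y. Kaz h u k z \<zeta> y \<partial>lborel) - \<zeta> $ k * (\<integral>y. Ka h u k z \<zeta> y \<partial>lborel))"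
      by (simp add: Aop_def[of h k "Aop h k (FBI h u)"] dzAop AopF[OF S] algebra_simps)
    ultimately show ?thesis by (simp only:)
  qed
  have Zj: "Zop h j (FBI h u) z \<zeta> = 0" for j
  proof -
    define J where "J = jap \<zeta>"
    have J0: "J \<noteq> 0" using Re_jap_pos[OF S] by (auto simp: J_def)
    define f1 where "f1 y = inverse J * Ka h u j z \<zeta> y" for y
    define g where "g k y = complex_of_real h * (- \<i>) * Kaz h u k z \<zeta> y - \<zeta> $ k * Ka h u k z \<zeta> y" for k y
    define f2 where "f2 y = (1/2) * inverse (J ^ 3) * \<zeta> $ j * (\<Sum>k\<in>UNIV. g k y)" for y
    define f3 where "f3 y = \<i> * complex_of_real h * ((- \<i>) * Kzeta h u j z \<zeta> y)" for y
    define f4 where "f4 y = complex_of_real (real CARD('n) / 4 * h) * inverse (J ^ 2) * \<zeta> $ j * Kf h u z \<zeta> y" for y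
    have ig: "integrable lborel (g k)" for k
      unfolding g_def using IF(2)[OF S] IF(4)[OF S, THEN conjunct1] by simp
    have i1: "integrable lborel f1" unfolding f1_def using IF(2)[OF S] by simp
    have i2: "integrable lborel f2" unfolding f2_def using ig by simp
    have i3: "integrable lborel f3" unfolding f3_def using IF(5)[OF S, THEN conjunct1] by simp
    have i4: "integrable lborel f4" unfolding f4_def using IF(1)[OF S] by simp
    have zero: "f1 y + f2 y - f3 y - f4 y = 0" for y
      unfolding f1_def f2_def f3_def f4_def g_def J_def by (rule pointwise_zero[OF h0]) (use J0 J_def in simp)
    have "(\<integral>y. f1 y + f2 y - f3 y - f4 y \<partial>lborel) = 0" by (simp only: zero) simp
    moreover have "(\<integral>y. f1 y + f2 y - f3 y - f4 y \<partial>lborel)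
        = (\<integral>y. f1 y \<partial>lborel) + (\<integral>y. f2 y \<partial>lborel) - (\<integral>y. f3 y \<partial>lborel) - (\<integral>y. f4 y \<partial>lborel)"
      using i1 i2 i3 i4 by simp
    moreover have "(\<integral>y. f2 y \<partial>lborel) = (1/2) * inverse (J ^ 3) * \<zeta> $ j * (\<Sum>k\<in>UNIV. (\<integral>y. g k y \<partial>lborel))"
      unfolding f2_def using ig by (simp add: integral_sum)
    ultimately have lin: "inverse J * (\<integral>y. Ka h u j z \<zeta> y \<partial>lborel)
        + (1/2) * inverse (J ^ 3) * \<zeta> $ j * (\<Sum>k\<in>UNIV. (\<integral>y. g k y \<partial>lborel))
        - \<i> * complex_of_real h * ((- \<i>) * (\<integral>y. Kzeta h u j z \<zeta> y \<partial>lborel))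
        - complex_of_real (real CARD('n) / 4 * h) * inverse (J ^ 2) * \<zeta> $ j * (\<integral>y. Kf h u z \<zeta> y \<partial>lborel) = 0"
      unfolding f1_def f3_def f4_def by simp
    have "Zop h j (FBI h u) z \<zeta> = c0 * (inverse J * (\<integral>y. Ka h u j z \<zeta> y \<partial>lborel)
        + (1/2) * inverse (J ^ 3) * \<zeta> $ j * (\<Sum>k\<in>UNIV. (\<integral>y. g k y \<partial>lborel))
        - \<i> * complex_of_real h * ((- \<i>) * (\<integral>y. Kzeta h u j z \<zeta> y \<partial>lborel))
        - complex_of_real (real CARD('n) / 4 * h) * inverse (J ^ 2) * \<zeta> $ j * (\<integral>y. Kf h u z \<zeta> y \<partial>lborel))"
      unfolding Zop_def AopF[OF S] AAop dzetaF Feq g_def J_def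
      by (simp add: sum_distrib_left algebra_simps)
    then show ?thesis using lin by simp
  qed
  have sh: "sep_holomorphic_at (FBI h u) z \<zeta>"
    unfolding sep_holomorphic_at_def field_differentiable_def
    using dF[OF S] dZF by blast
  show ?thesis using sh Zj by blast
qed

lemma rjap_pos: "rjap \<xi> > 0"
  unfolding rjap_def by (simp add: add_pos_nonneg)

lemma rjap_sq: "(rjap \<xi>)^2 = 1 + (norm \<xi>)^2"
  unfolding rjap_def by (simp add: add_nonneg_nonneg)

lemma seminorm_bound:
  fixes G :: "'n::finite rfun"
  assumes S1: "symbol_S1 G"
  shows "rjap \<xi> powr (-1) * \<bar>rpd (Inl k) G x \<xi>\<bar> \<le> seminorm2 G"
proof -
  define A where "A = {rjap \<xi> powr (real (n_xi ds) - 1) * \<bar>rpds ds G x \<xi>\<bar> | ds x \<xi>. length ds \<le> (2::nat)}"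
  have "\<forall>ds. \<exists>C. \<forall>x \<xi>. \<bar>rpds ds G x \<xi>\<bar> \<le> C * rjap \<xi> powr (1 - real (n_xi ds))"
    using S1 unfolding symbol_S1_def by blast
  then obtain Cf where Cf: "\<And>ds x \<xi>. \<bar>rpds ds G x \<xi>\<bar> \<le> Cf ds * rjap \<xi> powr (1 - real (n_xi ds))"
    by metis
  define D where "D = {ds :: ('n + 'n) list. set ds \<subseteq> UNIV \<and> length ds \<le> 2}"
  have finD: "finite D" unfolding D_def by (rule finite_lists_length_le) simp
  have bdd: "bdd_above A"
  proof (rule bdd_aboveI)
    fix v assume "v \<in> A"
    then obtain ds x \<xi> where v: "v = rjap \<xi> powr (real (n_xi ds) - 1) * \<bar>rpds ds G x \<xi>\<bar>" and l: "length ds \<le> 2"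
      unfolding A_def by blast
    have "v \<le> rjap \<xi> powr (real (n_xi ds) - 1) * (Cf ds * rjap \<xi> powr (1 - real (n_xi ds)))"
      unfolding v by (rule mult_left_mono[OF Cf]) simp
    also have "\<dots> = Cf ds * (rjap \<xi> powr (real (n_xi ds) - 1) * rjap \<xi> powr (1 - real (n_xi ds)))"
      by (simp add: algebra_simps)
    also have "rjap \<xi> powr (real (n_xi ds) - 1) * rjap \<xi> powr (1 - real (n_xi ds)) = 1"
      using rjap_pos[of \<xi>] by (simp add: powr_add[symmetric])
    also have "Cf ds * 1 \<le> Max (Cf ` D)"
      using finD l by (simp add: D_def)
    finally show "v \<le> Max (Cf ` D)" .
  qed
  have mem: "rjap \<xi> powr (real (n_xi [Inl k]) - 1) * \<bar>rpds [Inl k] G x \<xi>\<bar> \<in> A"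
    unfolding A_def by (intro CollectI exI[of _ "[Inl k]"] exI[of _ x] exI[of _ \<xi>]) simp
  have "rjap \<xi> powr (real (n_xi [Inl k]) - 1) * \<bar>rpds [Inl k] G x \<xi>\<bar> \<le> Sup A"
    by (rule cSup_upper[OF mem bdd])
  moreover have "n_xi [Inl k] = 0" by (simp add: n_xi_def)
  moreover have "rpds [Inl k] G = rpd (Inl k) G" by (simp add: rpds_def)
  ultimately show ?thesis by (simp add: seminorm2_def A_def)
qed

lemma Lambda_in:
  fixes G :: "'n::finite rfun"
  assumes S1: "symbol_S1 G" and small: "seminorm2 G < 1 / real CARD('n)"
  shows "snd (Lambda_pt G x \<xi>) \<in> Sset"
proof -
  define s where "s = seminorm2 G"
  define g where "g k = rpd (Inl k) G x \<xi>" for k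
  define n where "n = real CARD('n)"
  have n1: "n \<ge> 1" by (simp add: n_def)
  have rj: "rjap \<xi> > 0" by (rule rjap_pos)
  have gb: "\<bar>g k\<bar> \<le> s * rjap \<xi>" for k
  proof -
    have "rjap \<xi> powr (-1) * \<bar>g k\<bar> \<le> s" unfolding g_def s_def by (rule seminorm_bound[OF S1])
    then have "\<bar>g k\<bar> / rjap \<xi> \<le> s" using rj by (simp add: powr_minus divide_inverse mult.commute)
    then show ?thesis using rj by (simp add: divide_le_eq)
  qed
  have s0: "s \<ge> 0"
  proof -
    have "0 \<le> \<bar>g k\<bar>" for k by simp
    obtain k :: 'n where True by simp
    have "0 \<le> s * rjap \<xi>" using gb[of k] by linarith
    then show ?thesis using rj by (simp add: zero_le_mult_iff)
  qed
  have ns: "n * s^2 < 1"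
  proof -
    have "s < 1 / n" using small by (simp add: s_def n_def)
    then have "s * s \<le> s * (1/n)" using s0 by (intro mult_left_mono) auto
    then have "n * (s * s) \<le> s" using n1 by (simp add: field_simps)
    moreover have "1 / n \<le> 1" using n1 by simp
    ultimately show ?thesis using \<open>s < 1 / n\<close> by (simp add: power2_eq_square)
  qed
  have g2: "(g k)^2 \<le> s^2 * (1 + (norm \<xi>)^2)" for k
  proof -
    have "(g k)^2 \<le> (s * rjap \<xi>)^2" using power_mono[OF gb[of k] abs_ge_zero, of 2] by simp
    then show ?thesis by (simp add: power_mult_distrib rjap_sq)
  qed
  have sumg: "(\<Sum>k\<in>UNIV. (g k)^2) \<le> n * s^2 * (1 + (norm \<xi>)^2)"
  proof -
    have "(\<Sum>k\<in>UNIV. (g k)^2) \<le> (\<Sum>k\<in>(UNIV::'n set). s^2 * (1 + (norm \<xi>)^2))"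
      by (rule sum_mono) (rule g2)
    then show ?thesis by (simp add: n_def)
  qed
  have "n * s^2 * (1 + (norm \<xi>)^2) < 1 + (norm \<xi>)^2"
    using ns by (simp add: add_pos_nonneg)
  then have pos: "0 < 1 + (norm \<xi>)^2 - (\<Sum>k\<in>UNIV. (g k)^2)" using sumg by linarith
  have "Re (1 + (\<Sum>j\<in>UNIV. (snd (Lambda_pt G x \<xi>) $ j)^2)) = 1 + (\<Sum>j\<in>UNIV. (\<xi>$j)^2 - (g j)^2)"
    by (simp add: Lambda_pt_def Re_sum g_def power2_eq_square)
  also have "\<dots> = 1 + (norm \<xi>)^2 - (\<Sum>k\<in>UNIV. (g k)^2)"
    by (simp add: sum_subtractf norm_sq_vec)
  finally show ?thesis using pos by (simp add: Sset_def)
qed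

theorem proposition5p1:
  shows "\<exists>\<epsilon>0>0. \<forall>(G :: 'n::finite rfun) (h::real) (\<delta>::real) (u :: real^'n \<Rightarrow> complex).
     symbol_S1 G \<and> seminorm2 G < \<epsilon>0 \<and> h > 0 \<and> \<delta> > 0 \<and> u \<in> A_delta \<delta> \<longrightarrow>
       (\<exists>\<Omega>. open \<Omega> \<and> Lambda G \<subseteq> \<Omega> \<and>
          (\<forall>(z, \<zeta>)\<in>\<Omega>. sep_holomorphic_at (FBI h u) z \<zeta> \<and>
                         (\<forall>j. Zop h j (FBI h u) z \<zeta> = 0))) \<and>
       (\<forall>x \<xi> j. Zop h j (FBI h u) (fst (Lambda_pt G x \<xi>)) (snd (Lambda_pt G x \<xi>)) = 0)"
proof (rule exI[of _ "1 / real CARD('n)"], intro conjI allI impI)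
  show "0 < 1 / real CARD('n)" by simp
  fix G :: "'n rfun" and h \<delta> :: real and u :: "real^'n \<Rightarrow> complex"
  assume A: "symbol_S1 G \<and> seminorm2 G < 1 / real CARD('n) \<and> h > 0 \<and> \<delta> > 0 \<and> u \<in> A_delta \<delta>"
  then have S1: "symbol_S1 G" and sm: "seminorm2 G < 1 / real CARD('n)" and h: "h > 0" and uA: "u \<in> A_delta \<delta>"
    by auto
  have u: "u \<in> L2_torus" using uA by (simp add: A_delta_def)
  have LS: "snd (Lambda_pt G x \<xi>) \<in> Sset" for x \<xi> by (rule Lambda_in[OF S1 sm])
  let ?\<Omega> = "(UNIV :: (complex^'n) set) \<times> (Sset :: (complex^'n) set)"
  have "open ?\<Omega> \<and> Lambda G \<subseteq> ?\<Omega> \<and>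
          (\<forall>(z, \<zeta>)\<in>?\<Omega>. sep_holomorphic_at (FBI h u) z \<zeta> \<and> (\<forall>j. Zop h j (FBI h u) z \<zeta> = 0))"
  proof (intro conjI)
    show "open ?\<Omega>" by (intro open_Times open_UNIV open_Sset)
    show "Lambda G \<subseteq> ?\<Omega>"
    proof
      fix p assume "p \<in> Lambda G"
      then obtain x \<xi> where "p = Lambda_pt G x \<xi>" unfolding Lambda_def by auto
      then show "p \<in> ?\<Omega>" using LS[of x \<xi>] by (simp add: mem_Times_iff)
    qed
    show "\<forall>(z, \<zeta>)\<in>?\<Omega>. sep_holomorphic_at (FBI h u) z \<zeta> \<and> (\<forall>j. Zop h j (FBI h u) z \<zeta> = 0)"
      using Omega_facts[OF h u] by auto
  qed
  then show "\<exists>\<Omega>. open \<Omega> \<and> Lambda G \<subseteq> \<Omega> \<and>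
          (\<forall>(z, \<zeta>)\<in>\<Omega>. sep_holomorphic_at (FBI h u) z \<zeta> \<and> (\<forall>j. Zop h j (FBI h u) z \<zeta> = 0))"
    by blast
  fix x \<xi> j
  show "Zop h j (FBI h u) (fst (Lambda_pt G x \<xi>)) (snd (Lambda_pt G x \<xi>)) = 0"
    using Omega_facts[OF h u LS[of x \<xi>]] by blast
qed

end
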